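(* Let $\varepsilon\ge0$ and $\delta_0\in\mathbb R$ be such that \[ \inf_{[-\ell,\ell]}h_{\rm eq}-\varepsilon|\delta_0|>0\qquad\text{and}\qquad \varepsilon|\delta_0|<\tau_0(\varepsilon|\delta_0|)\,\frac{2r_0}{\ell}. \] Then there exists a unique global solution $\delta\in C^\infty(\mathbb R^+)$ of \[ \tau_0(\varepsilon\delta)^2\ddot\delta+\ell\dot\delta+\delta+\varepsilon\big(\tau_0(\varepsilon\delta)\tau_0'(\varepsilon\delta)+\gamma(\varepsilon\dot\delta)\big)\dot\delta^2=0 \] with initial condition $(\delta,\dot\delta)_{|t=0}=(\delta_0,0)$.
   Context: $\ell>0$, $\tau_{\rm buoy}>0$, $h_{\rm eq}$ a positive continuous even function on $[-\ell,\ell]$. For real $r$ with $h_{\rm eq}+r>0$, $\tau_0(r)=\big(\tau_{\rm buoy}^2+\frac1{2\ell}\int_{-\ell}^\ell\frac{x^2}{h_{\rm eq}(x)+r}dx\big)^{1/2}$ and $\tau_0'$ its derivative. $r_0=\frac4{27}$. For $r<r_0$, $\sigma_0(r)$ is the largest real root of $\sigma^3-\sigma^2+r=0$ (the real branch with $\sigma_0(0)=1$; the paper writes it by Cardano's formula $\sigma_0(r)=\frac13(1+C_-(r)+C_+(r))$, $C_\pm(r)=\frac32(-4r+2r_0\pm4\sqrt{r(r-r_0)})^{1/3}$). The function $\gamma$ is defined for $\ell y<2r_0$ by $y^2\gamma(y)=-(\sigma_0(\frac{\ell y}{2})-1)(3\sigma_0(\frac{\ell y}{2})-1)-\ell y$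 for $y\ne0$, and $\gamma(0)=\ell^2/4$; it is smooth. *)

theory Defs
  imports "HOL-Analysis.Analysis"
begin

definition r0 :: real where "r0 = 4/27"

definition tau0 :: "real \<Rightarrow> real \<Rightarrow> (real \<Rightarrow> real) \<Rightarrow> real \<Rightarrow> real" where
  "tau0 l tb h r = sqrt (tb\<^sup>2 + 1 / (2 * l) * integral {-l..l} (\<lambda>x. x\<^sup>2 / (h x + r)))"

definition tau0' :: "real \<Rightarrow> real \<Rightarrow> (real \<Rightarrow> real) \<Rightarrow> real \<Rightarrow> real" where
  "tau0' l tb h r = deriv (tau0 l tb h) r"

definition sigma0 :: "real \<Rightarrow> real" where
  "sigma0 r = (GREATEST s. s ^ 3 - s\<^sup>2 + r = 0)"

definition gamma :: "real \<Rightarrow> real \<Rightarrow> real" where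
  "gamma l y = (if y = 0 then l\<^sup>2 / 4
     else (- (sigma0 (l * y / 2) - 1) * (3 * sigma0 (l * y / 2) - 1) - l * y) / y\<^sup>2)"

text \<open>D is a tower of (one-sided at 0) derivatives of D 0 on [0,\<infinity>): C^\<infinity> on R^+.\<close>
definition deriv_tower_nonneg :: "(nat \<Rightarrow> real \<Rightarrow> real) \<Rightarrow> bool" where
  "deriv_tower_nonneg D \<longleftrightarrow>
     (\<forall>n. \<forall>t\<ge>0. (D n has_real_derivative D (Suc n) t) (at t within {0..}))"

text \<open>delta is a global C^\<infinity> solution on [0,\<infinity>) of the ODE with initial data (delta0, 0),
  where all terms of the ODE are defined along the solution.\<close>
definition is_global_solution ::
  "real \<Rightarrow> real \<Rightarrow> (real \<Rightarrow> real) \<Rightarrow> real \<Rightarrow> real \<Rightarrow> (real \<Rightarrow> real) \<Rightarrow> bool" where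
  "is_global_solution l tb h eps d0 \<delta> \<longleftrightarrow>
     (\<exists>D. D 0 = \<delta> \<and> deriv_tower_nonneg D \<and> D 0 0 = d0 \<and> D 1 0 = 0 \<and>
       (\<forall>t\<ge>0. (\<forall>x\<in>{-l..l}. h x + eps * D 0 t > 0) \<and> l * (eps * D 1 t) < 2 * r0 \<and>
          (tau0 l tb h (eps * D 0 t))\<^sup>2 * D 2 t + l * D 1 t + D 0 t
          + eps * (tau0 l tb h (eps * D 0 t) * tau0' l tb h (eps * D 0 t)
                   + gamma l (eps * D 1 t)) * (D 1 t)\<^sup>2 = 0))"

end

theory Submission
  imports Defs
begin

lemma within_Ici_from_Icc:
  fixes t :: real
  assumes "t \<ge> 0" "t < b"
  shows "at t within {0..b} = at t within {0..}"
  by (rule at_within_nhd[where S="{..<b}"]) (use assms in auto)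

lemma int_deriv:
  fixes g :: "real \<Rightarrow> 'a::banach"
  assumes "continuous_on {0..} g" "t \<ge> 0"
  shows "((\<lambda>u. integral {0..u} g) has_vector_derivative g t) (at t within {0..})"
proof -
  have "continuous_on {0..t+1} g" using assms(1) by (rule continuous_on_subset) auto
  from integral_has_vector_derivative[OF this, of t] assms(2)
  have "((\<lambda>u. integral {0..u} g) has_vector_derivative g t) (at t within {0..t+1})" by auto
  then show ?thesis using within_Ici_from_Icc[of t "t+1"] assms(2) by simp
qed

lemma lipschitz_cont:
  fixes \<Phi> :: "'a::real_normed_vector \<Rightarrow> 'b::real_normed_vector"
  assumes "L > 0" "\<forall>p q. norm (\<Phi> p - \<Phi> q) \<le> L * norm (p - q)"
  shows "continuous_on UNIV \<Phi>"
  unfolding continuous_on_iff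
proof (intro ballI allI impI)
  fix x :: 'a and e :: real assume "e > 0"
  show "\<exists>d>0. \<forall>x'\<in>UNIV. dist x' x < d \<longrightarrow> dist (\<Phi> x') (\<Phi> x) < e"
  proof (intro exI[of _ "e / L"] conjI ballI impI)
    show "e / L > 0" using assms \<open>e>0\<close> by simp
    fix y assume "dist y x < e / L"
    then have "L * norm (y - x) < e" using assms(1) by (simp add: dist_norm field_simps)
    then show "dist (\<Phi> y) (\<Phi> x) < e" using assms(2) by (metis dist_norm le_less_trans)
  qed
qed

lemma exp_weight_bound:
  fixes k t :: real assumes "k > 0" "t \<ge> 0"
  shows "t * exp (- k * t) \<le> 1 / k"
proof -
  have "1 + k * t \<le> exp (k * t)" by (rule exp_ge_add_one_self)
  then have "k * t \<le> exp (k * t)" by linarith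
  then have "t \<le> exp (k * t) / k" using assms by (simp add: field_simps)
  then have "t * exp (- k * t) \<le> exp (k * t) / k * exp (- k * t)"
    by (rule mult_right_mono) auto
  also have "\<dots> = 1 / k" by (simp add: exp_minus field_simps)
  finally show ?thesis .
qed

lemma exp_integral:
  fixes k \<tau> :: real assumes "k > 0" "\<tau> \<ge> 0"
  shows "integral {0..\<tau>} (\<lambda>s. exp (k * s)) = (exp (k * \<tau>) - 1) / k"
proof -
  have "((\<lambda>s. exp (k * s)) has_integral (exp (k * \<tau>) / k - exp (k * 0) / k)) {0..\<tau>}"
    apply (rule fundamental_theorem_of_calculus[OF assms(2)])
    using assms(1)
    by (auto intro!: derivative_eq_intros simp: has_real_derivative_iff_has_vector_derivative[symmetric])
  then show ?thesis using assms by (simp add: integral_unique diff_divide_distrib)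
qed

definition Gf :: "real \<Rightarrow> ('a::banach \<Rightarrow> 'a) \<Rightarrow> 'a \<Rightarrow> (real \<Rightarrow> 'a) \<Rightarrow> real \<Rightarrow> 'a" where
  "Gf k \<Phi> u0 w t = exp (- k * max t 0) *\<^sub>R (u0 + integral {0..max t 0} (\<lambda>s. \<Phi> (exp (k * s) *\<^sub>R w s)))"

lemma integral_bound_const:
  fixes g :: "real \<Rightarrow> 'a::banach"
  assumes "continuous_on {0..\<tau>} g" "\<tau> \<ge> 0" "\<forall>s. norm (g s) \<le> M"
  shows "norm (integral {0..\<tau>} g) \<le> M * \<tau>"
proof -
  have "M \<ge> 0" using assms(3) norm_ge_zero order_trans by blast
  have "(g has_integral integral {0..\<tau>} g) (cbox 0 \<tau>)"
    using integrable_continuous_interval[OF assms(1)] by (simp add: integrable_integral)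
  from has_integral_bound[OF \<open>M\<ge>0\<close> this] assms show ?thesis by auto
qed

lemma Gf_bcontfun:
  fixes \<Phi> :: "'a::banach \<Rightarrow> 'a"
  assumes k: "k > 0" and L: "L > 0" "\<forall>p q. norm (\<Phi> p - \<Phi> q) \<le> L * norm (p - q)"
    and M: "\<forall>p. norm (\<Phi> p) \<le> M" and w: "continuous_on UNIV w"
  shows "Gf k \<Phi> u0 w \<in> bcontfun"
proof -
  define g where "g s = \<Phi> (exp (k * s) *\<^sub>R w s)" for s
  have cg: "continuous_on UNIV g"
    unfolding g_def
    by (rule continuous_on_compose2[OF lipschitz_cont[OF L]]) (auto intro!: continuous_intros w)
  have cI: "continuous_on {0..} (\<lambda>u. integral {0..u} g)"
    using int_deriv[OF continuous_on_subset[OF cg]]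
    by (auto simp: continuous_on_eq_continuous_within intro: has_vector_derivative_continuous)
  have c1: "continuous_on UNIV (\<lambda>t. integral {0..max t 0} g)"
    by (rule continuous_on_compose2[OF cI]) (auto intro!: continuous_intros)
  have cont: "continuous_on UNIV (Gf k \<Phi> u0 w)"
    unfolding Gf_def g_def[symmetric]
    by (intro continuous_intros c1)
  have "norm (Gf k \<Phi> u0 w t) \<le> norm u0 + M / k" for t
  proof -
    define \<tau> where "\<tau> = max t 0"
    have "\<tau> \<ge> 0" by (simp add: \<tau>_def)
    have M0: "M \<ge> 0" using M norm_ge_zero order_trans by blast
    have ib: "norm (integral {0..\<tau>} g) \<le> M * \<tau>"
      by (rule integral_bound_const) (use continuous_on_subset[OF cg] \<open>\<tau>\<ge>0\<close> M in \<open>auto simp: g_def\<close>)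
    have "norm (Gf k \<Phi> u0 w t) = exp (- k * \<tau>) * norm (u0 + integral {0..\<tau>} g)"
      by (simp add: Gf_def g_def[abs_def] \<tau>_def)
    also have "\<dots> \<le> exp (- k * \<tau>) * (norm u0 + M * \<tau>)"
      by (intro mult_left_mono order_trans[OF norm_triangle_ineq]) (use ib in auto)
    also have "\<dots> = exp (- k * \<tau>) * norm u0 + M * (\<tau> * exp (- k * \<tau>))"
      by (simp add: algebra_simps)
    also have "\<dots> \<le> norm u0 + M * (1 / k)"
    proof (intro add_mono mult_left_mono)
      show "exp (- k * \<tau>) * norm u0 \<le> norm u0"
        using k \<open>\<tau>\<ge>0\<close> by (intro mult_left_le_one_le) auto
      show "\<tau> * exp (- k * \<tau>) \<le> 1 / k" by (rule exp_weight_bound[OF k \<open>\<tau>\<ge>0\<close>])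
    qed (use M0 in auto)
    finally show ?thesis by simp
  qed
  then have "bounded (range (Gf k \<Phi> u0 w))"
    unfolding bounded_iff by blast
  with cont show ?thesis by (simp add: bcontfun_def)
qed

lemma Gf_contract:
  fixes \<Phi> :: "'a::banach \<Rightarrow> 'a"
  assumes L: "L > 0" "\<forall>p q. norm (\<Phi> p - \<Phi> q) \<le> L * norm (p - q)"
    and w1: "continuous_on UNIV w1" and w2: "continuous_on UNIV w2"
    and d: "\<forall>s. norm (w1 s - w2 s) \<le> d"
  shows "norm (Gf (2*L) \<Phi> u0 w1 t - Gf (2*L) \<Phi> u0 w2 t) \<le> d / 2"
proof -
  define k where "k = 2 * L"
  have k: "k > 0" using L by (simp add: k_def)
  define g1 where "g1 s = \<Phi> (exp (k * s) *\<^sub>R w1 s)" for s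
  define g2 where "g2 s = \<Phi> (exp (k * s) *\<^sub>R w2 s)" for s
  have cg1: "continuous_on UNIV g1"
    unfolding g1_def
    by (rule continuous_on_compose2[OF lipschitz_cont[OF L]]) (auto intro!: continuous_intros w1)
  have cg2: "continuous_on UNIV g2"
    unfolding g2_def
    by (rule continuous_on_compose2[OF lipschitz_cont[OF L]]) (auto intro!: continuous_intros w2)
  define \<tau> where "\<tau> = max t 0"
  have \<tau>: "\<tau> \<ge> 0" by (simp add: \<tau>_def)
  have i1: "g1 integrable_on {0..\<tau>}" by (rule integrable_continuous_interval[OF continuous_on_subset[OF cg1]]) auto
  have i2: "g2 integrable_on {0..\<tau>}" by (rule integrable_continuous_interval[OF continuous_on_subset[OF cg2]]) auto
  have ie: "(\<lambda>s. L * d * exp (k * s)) integrable_on {0..\<tau>}"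
    by (rule integrable_continuous_interval) (auto intro!: continuous_intros)
  have pw: "norm (g1 s - g2 s) \<le> L * d * exp (k * s)" for s
  proof -
    have "norm (g1 s - g2 s) \<le> L * norm (exp (k * s) *\<^sub>R w1 s - exp (k * s) *\<^sub>R w2 s)"
      unfolding g1_def g2_def using L(2) by blast
    also have "\<dots> = L * (exp (k * s) * norm (w1 s - w2 s))"
      by (simp add: scaleR_diff_right[symmetric])
    also have "\<dots> \<le> L * (exp (k * s) * d)"
      using L(1) d by (intro mult_left_mono) auto
    finally show ?thesis by (simp add: algebra_simps)
  qed
  have "norm (integral {0..\<tau>} (\<lambda>s. g1 s - g2 s)) \<le> integral {0..\<tau>} (\<lambda>s. L * d * exp (k * s))"
    by (rule integral_norm_bound_integral[OF integrable_diff[OF i1 i2] ie]) (use pw in auto)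
  also have "\<dots> = L * d * ((exp (k * \<tau>) - 1) / k)"
    using exp_integral[OF k \<tau>] by simp
  finally have ib: "norm (integral {0..\<tau>} g1 - integral {0..\<tau>} g2) \<le> L * d * ((exp (k * \<tau>) - 1) / k)"
    using integral_diff[OF i1 i2] by simp
  have d0: "d \<ge> 0" using d norm_ge_zero order_trans by blast
  have "Gf k \<Phi> u0 w1 t - Gf k \<Phi> u0 w2 t = exp (- k * \<tau>) *\<^sub>R (integral {0..\<tau>} g1 - integral {0..\<tau>} g2)"
    by (simp add: Gf_def g1_def[abs_def] g2_def[abs_def] \<tau>_def algebra_simps)
  then have "norm (Gf k \<Phi> u0 w1 t - Gf k \<Phi> u0 w2 t) = exp (- k * \<tau>) * norm (integral {0..\<tau>} g1 - integral {0..\<tau>} g2)"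
    by simp
  also have "\<dots> \<le> exp (- k * \<tau>) * (L * d * ((exp (k * \<tau>) - 1) / k))"
    by (intro mult_left_mono ib) auto
  also have "\<dots> = L * d * (1 - exp (- k * \<tau>)) / k"
    by (simp add: field_simps exp_minus)
  also have "\<dots> \<le> L * d * 1 / k"
    using k L d0 by (intro divide_right_mono mult_left_mono) auto
  also have "\<dots> = d / 2" using L by (simp add: k_def)
  finally show ?thesis by (simp add: k_def)
qed

definition odesol :: "('a::banach \<Rightarrow> 'a) \<Rightarrow> 'a \<Rightarrow> (real \<Rightarrow> 'a) \<Rightarrow> bool" where
  "odesol \<Phi> u0 v \<longleftrightarrow> continuous_on {0..} v \<and> v 0 = u0 \<and>
     (\<forall>t\<ge>0. (v has_vector_derivative \<Phi> (v t)) (at t within {0..}))"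

lemma odesol_integral:
  fixes \<Phi> :: "'a::banach \<Rightarrow> 'a"
  assumes "odesol \<Phi> u0 v" "t \<ge> 0"
  shows "v t = u0 + integral {0..t} (\<lambda>s. \<Phi> (v s))"
proof -
  have "((\<lambda>s. \<Phi> (v s)) has_integral (v t - v 0)) {0..t}"
    by (rule fundamental_theorem_of_calculus[OF assms(2)])
       (use assms(1) in \<open>auto simp: odesol_def intro: has_vector_derivative_within_subset\<close>)
  then show ?thesis using assms(1) by (simp add: integral_unique odesol_def)
qed

lemma weighted_bound:
  fixes u0 I :: "'a::real_normed_vector"
  assumes k: "k > 0" and \<tau>: "\<tau> \<ge> 0" and ib: "norm I \<le> M * \<tau>" and M0: "M \<ge> 0"
  shows "norm (exp (- k * \<tau>) *\<^sub>R (u0 + I)) \<le> norm u0 + M / k"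
proof -
  have "norm (exp (- k * \<tau>) *\<^sub>R (u0 + I)) = exp (- k * \<tau>) * norm (u0 + I)"
    by simp
  also have "\<dots> \<le> exp (- k * \<tau>) * (norm u0 + M * \<tau>)"
    by (intro mult_left_mono order_trans[OF norm_triangle_ineq]) (use ib in auto)
  also have "\<dots> = exp (- k * \<tau>) * norm u0 + M * (\<tau> * exp (- k * \<tau>))"
    by (simp add: algebra_simps)
  also have "\<dots> \<le> norm u0 + M * (1 / k)"
  proof (intro add_mono mult_left_mono)
    show "exp (- k * \<tau>) * norm u0 \<le> norm u0"
      using k \<tau> by (intro mult_left_le_one_le) auto
    show "\<tau> * exp (- k * \<tau>) \<le> 1 / k" by (rule exp_weight_bound[OF k \<tau>])
  qed (use M0 in auto)
  finally show ?thesis by simp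
qed

theorem ode_global:
  fixes \<Phi> :: "'a::banach \<Rightarrow> 'a"
  assumes L: "L > 0" "\<forall>p q. norm (\<Phi> p - \<Phi> q) \<le> L * norm (p - q)"
    and M: "\<forall>p. norm (\<Phi> p) \<le> M"
  shows "\<exists>u. odesol \<Phi> u0 u \<and> (\<forall>v. odesol \<Phi> u0 v \<longrightarrow> (\<forall>t\<ge>0. v t = u t))"
proof -
  define k where "k = 2 * L"
  have k: "k > 0" using L by (simp add: k_def)
  have M0: "M \<ge> 0" using M norm_ge_zero order_trans by blast
  define G :: "(real \<Rightarrow>\<^sub>C 'a) \<Rightarrow> (real \<Rightarrow>\<^sub>C 'a)" where
    "G w = Bcontfun (Gf k \<Phi> u0 (apply_bcontfun w))" for w
  have Gapp: "apply_bcontfun (G w) = Gf k \<Phi> u0 (apply_bcontfun w)" for w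
    unfolding G_def by (rule Bcontfun_inverse[OF Gf_bcontfun[OF k L M]]) simp
  have contr: "\<forall>x y. dist (G x) (G y) \<le> (1/2) * dist x y"
  proof (intro allI)
    fix x y :: "real \<Rightarrow>\<^sub>C 'a"
    show "dist (G x) (G y) \<le> (1/2) * dist x y"
    proof (rule dist_bound)
      fix t
      have "\<forall>s. norm (apply_bcontfun x s - apply_bcontfun y s) \<le> dist x y"
        using dist_bounded by (metis dist_norm)
      from Gf_contract[OF L _ _ this, of u0 t]
      show "dist (apply_bcontfun (G x) t) (apply_bcontfun (G y) t) \<le> (1/2) * dist x y"
        by (simp add: Gapp dist_norm k_def)
    qed
  qed
  from banach_fix_type[OF _ _ contr] obtain w where w: "G w = w" and wuniq: "\<And>w'. G w' = w' \<Longrightarrow> w' = w"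
    by auto
  define u where "u t = exp (k * t) *\<^sub>R apply_bcontfun w t" for t
  have cu: "continuous_on UNIV u" unfolding u_def by (intro continuous_intros) auto
  have ueq: "u t = u0 + integral {0..t} (\<lambda>s. \<Phi> (u s))" if "t \<ge> 0" for t
  proof -
    have "apply_bcontfun w t = Gf k \<Phi> u0 (apply_bcontfun w) t" using Gapp[of w] w by simp
    then have "u t = exp (k * t) *\<^sub>R (exp (- k * t) *\<^sub>R (u0 + integral {0..t} (\<lambda>s. \<Phi> (exp (k * s) *\<^sub>R apply_bcontfun w s))))"
      using that by (simp add: u_def Gf_def)
    also have "\<dots> = u0 + integral {0..t} (\<lambda>s. \<Phi> (u s))"
      by (simp add: u_def exp_minus field_simps)
    finally show ?thesis .
  qed
  have solu: "odesol \<Phi> u0 u"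
    unfolding odesol_def
  proof (intro conjI allI impI)
    show "continuous_on {0..} u" using cu by (rule continuous_on_subset) auto
    show "u 0 = u0" using ueq[of 0] by simp
    fix t :: real assume t: "t \<ge> 0"
    have cg: "continuous_on {0..} (\<lambda>s. \<Phi> (u s))"
      by (rule continuous_on_compose2[OF lipschitz_cont[OF L] continuous_on_subset[OF cu]]) auto
    have "((\<lambda>t. u0 + integral {0..t} (\<lambda>s. \<Phi> (u s))) has_vector_derivative \<Phi> (u t)) (at t within {0..})"
      using int_deriv[OF cg t] by (auto intro!: derivative_eq_intros)
    then show "(u has_vector_derivative \<Phi> (u t)) (at t within {0..})"
      by (rule has_vector_derivative_transform[rotated 2]) (use t ueq in auto)
  qed
  have "\<forall>v. odesol \<Phi> u0 v \<longrightarrow> (\<forall>t\<ge>0. v t = u t)"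
  proof (rule allI, rule impI)
    fix v assume v: "odesol \<Phi> u0 v"
    have cv: "continuous_on {0..} v" using v by (simp add: odesol_def)
    define wv where "wv t = exp (- k * max t 0) *\<^sub>R v (max t 0)" for t
    have cwv: "continuous_on UNIV wv"
      unfolding wv_def
      by (intro continuous_intros continuous_on_compose2[OF cv]) auto
    have cgv: "continuous_on {0..} (\<lambda>s. \<Phi> (v s))"
      by (rule continuous_on_compose2[OF lipschitz_cont[OF L] cv]) auto
    have "norm (wv t) \<le> norm u0 + M / k" for t
    proof -
      define \<tau> where "\<tau> = max t 0"
      have \<tau>: "\<tau> \<ge> 0" by (simp add: \<tau>_def)
      have ib: "norm (integral {0..\<tau>} (\<lambda>s. \<Phi> (v s))) \<le> M * \<tau>"
        by (rule integral_bound_const) (use continuous_on_subset[OF cgv] \<tau> M in auto)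
      have "wv t = exp (- k * \<tau>) *\<^sub>R (u0 + integral {0..\<tau>} (\<lambda>s. \<Phi> (v s)))"
        using odesol_integral[OF v \<tau>] by (simp add: wv_def \<tau>_def)
      then show ?thesis using weighted_bound[OF k \<tau> ib M0] by simp
    qed
    then have bwv: "bounded (range wv)" unfolding bounded_iff by blast
    have wvb: "wv \<in> bcontfun" using cwv bwv by (simp add: bcontfun_def)
    have "Gf k \<Phi> u0 wv t = wv t" for t
    proof -
      define \<tau> where "\<tau> = max t 0"
      have \<tau>: "\<tau> \<ge> 0" by (simp add: \<tau>_def)
      have "integral {0..\<tau>} (\<lambda>s. \<Phi> (exp (k * s) *\<^sub>R wv s)) = integral {0..\<tau>} (\<lambda>s. \<Phi> (v s))"
        by (rule integral_cong) (auto simp: wv_def exp_minus)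
      then show ?thesis
        using odesol_integral[OF v \<tau>] by (simp add: Gf_def wv_def \<tau>_def)
    qed
    then have "Gf k \<Phi> u0 wv = wv" by (rule ext)
    then have "G (Bcontfun wv) = Bcontfun wv"
      unfolding G_def using Bcontfun_inverse[OF wvb] by simp
    then have "Bcontfun wv = w" by (rule wuniq)
    then have wvw: "wv t = apply_bcontfun w t" for t using Bcontfun_inverse[OF wvb] by auto
    have "v t = u t" if "t \<ge> 0" for t
    proof -
      from that have "v t /\<^sub>R exp (k * t) = apply_bcontfun w t" using wvw[of t] by (simp add: wv_def exp_minus)
      then have "exp (k * t) *\<^sub>R (v t /\<^sub>R exp (k * t)) = u t" by (simp add: u_def)
      then show "v t = u t" by simp
    qed
    then show "\<forall>t\<ge>0. v t = u t" by blast
  qed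
  with solu show ?thesis by blast
qed

definition dS :: "real set \<Rightarrow> (real \<Rightarrow> real) \<Rightarrow> real \<Rightarrow> real" where
  "dS S f x = vector_derivative f (at x within S)"

fun Cs :: "nat \<Rightarrow> real set \<Rightarrow> (real \<Rightarrow> real) \<Rightarrow> bool" where
  "Cs 0 S f = continuous_on S f"
| "Cs (Suc k) S f = ((\<forall>x\<in>S. (f has_real_derivative dS S f x) (at x within S)) \<and> Cs k S (dS S f))"

definition perf :: "real set \<Rightarrow> bool" where
  "perf S \<longleftrightarrow> (\<forall>x\<in>S. at x within S \<noteq> bot)"

definition smooth :: "real set \<Rightarrow> (real \<Rightarrow> real) \<Rightarrow> bool" where
  "smooth S f \<longleftrightarrow> (\<forall>k. Cs k S f)"

lemma perf_open: "open S \<Longrightarrow> perf S"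
  unfolding perf_def
proof
  fix x assume "open S" "x \<in> S"
  then have "at x within S = at x" by (rule at_within_open[rotated])
  then show "at x within S \<noteq> bot" by simp
qed

lemma perf_Ici: "perf {0::real..}"
  unfolding perf_def
proof
  fix x :: real assume x: "x \<in> {0..}"
  have "x islimpt {0..}"
    unfolding islimpt_approachable_real
  proof (intro allI impI)
    fix e :: real assume "e > 0"
    show "\<exists>x'\<in>{0..}. x' \<noteq> x \<and> \<bar>x' - x\<bar> < e"
      by (rule bexI[of _ "x + e/2"]) (use \<open>e>0\<close> x in auto)
  qed
  then show "at x within {0..} \<noteq> bot" using trivial_limit_within by blast
qed

lemma dS_eq:
  assumes "perf S" "x \<in> S" "(f has_real_derivative D) (at x within S)"
  shows "dS S f x = D"
  unfolding dS_def
  by (rule vector_derivative_within) (use assms in \<open>auto simp: perf_def has_real_derivative_iff_has_vector_derivative\<close>)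

lemma Cs_cont:
  assumes "Cs k S f" shows "continuous_on S f"
proof (cases k)
  case 0 then show ?thesis using assms by simp
next
  case (Suc j)
  then have "\<forall>x\<in>S. (f has_real_derivative dS S f x) (at x within S)" using assms by simp
  then show ?thesis by (intro DERIV_continuous_on) auto
qed

lemma Cs_mono: "Cs (Suc k) S f \<Longrightarrow> Cs k S f"
proof (induction k arbitrary: f)
  case 0 then show ?case using Cs_cont[OF 0] by simp
next
  case (Suc k) then show ?case by auto
qed

lemma Cs_le: "j \<le> k \<Longrightarrow> Cs k S f \<Longrightarrow> Cs j S f"
proof (induction k)
  case 0 then show ?case by simp
next
  case (Suc k) show ?case
  proof (cases "j = Suc k")
    case True then show ?thesis using Suc.prems by simp
  next
    case False then have "j \<le> k" using Suc.prems by simp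
    then show ?thesis using Suc.IH Cs_mono[OF Suc.prems(2)] by blast
  qed
qed

lemma Cs_cong:
  assumes "Cs k S f" "perf S" "\<And>x. x \<in> S \<Longrightarrow> f x = g x"
  shows "Cs k S g"
  using assms
proof (induction k arbitrary: f g)
  case 0 then show ?case using continuous_on_cong by force
next
  case (Suc k)
  have dg: "(g has_real_derivative dS S f x) (at x within S)" if "x \<in> S" for x
    by (rule has_field_derivative_transform_within[of f _ _ _ 1]) (use Suc.prems that in auto)
  have "dS S g x = dS S f x" if "x \<in> S" for x using dS_eq[OF Suc.prems(2) that dg[OF that]] .
  then have "Cs k S (dS S g)" using Suc by auto
  with dg show ?case by (simp add: \<open>\<And>x. x \<in> S \<Longrightarrow> dS S g x = dS S f x\<close>)
qed

lemma Cs_const: "perf S \<Longrightarrow> Cs k S (\<lambda>x. c)"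
proof (induction k arbitrary: c)
  case 0 then show ?case by simp
next
  case (Suc k)
  have "dS S (\<lambda>x. c) x = 0" if "x \<in> S" for x by (rule dS_eq) (use Suc that in auto)
  then show ?case using Cs_cong[OF Suc.IH[OF Suc.prems, of 0] Suc.prems] by auto
qed

lemma Cs_id: "perf S \<Longrightarrow> Cs k S (\<lambda>x. x)"
proof (cases k)
  case 0 then show ?thesis by simp
next
  case (Suc j) assume p: "perf S"
  have "dS S (\<lambda>x. x) x = 1" if "x \<in> S" for x by (rule dS_eq) (use p that in auto)
  then show ?thesis using Suc Cs_cong[OF Cs_const[OF p, of j 1] p] p
    by (auto intro!: derivative_eq_intros)
qed

lemma Cs_add:
  assumes "Cs k S f" "Cs k S g" "perf S"
  shows "Cs k S (\<lambda>x. f x + g x)"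
  using assms
proof (induction k arbitrary: f g)
  case 0 then show ?case by (simp add: continuous_on_add)
next
  case (Suc k)
  have d: "((\<lambda>x. f x + g x) has_real_derivative dS S f x + dS S g x) (at x within S)" if "x \<in> S" for x
    using Suc.prems(1,2) that by (intro DERIV_add) auto
  have e: "dS S (\<lambda>x. f x + g x) x = dS S f x + dS S g x" if "x \<in> S" for x
    by (rule dS_eq[OF Suc.prems(3) that d[OF that]])
  have c: "Cs k S (\<lambda>x. dS S f x + dS S g x)"
    by (rule Suc.IH) (use Suc.prems in auto)
  have "Cs k S (dS S (\<lambda>x. f x + g x))" by (rule Cs_cong[OF c Suc.prems(3)]) (simp add: e)
  with d show ?case by (simp add: e)
qed

lemma Cs_mult:
  assumes "Cs k S f" "Cs k S g" "perf S"
  shows "Cs k S (\<lambda>x. f x * g x)"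
  using assms
proof (induction k arbitrary: f g)
  case 0 then show ?case by (simp add: continuous_on_mult)
next
  case (Suc k)
  have d: "((\<lambda>x. f x * g x) has_real_derivative dS S f x * g x + f x * dS S g x) (at x within S)" if "x \<in> S" for x
  proof -
    have "(f has_real_derivative dS S f x) (at x within S)" "(g has_real_derivative dS S g x) (at x within S)"
      using Suc.prems(1,2) that by auto
    from DERIV_mult[OF this] show ?thesis by (simp add: mult.commute)
  qed
  have e: "dS S (\<lambda>x. f x * g x) x = dS S f x * g x + f x * dS S g x" if "x \<in> S" for x
    by (rule dS_eq[OF Suc.prems(3) that d[OF that]])
  have "Cs k S (\<lambda>x. dS S f x * g x)"
    by (rule Suc.IH) (use Suc.prems Cs_mono[OF Suc.prems(2)] in auto)
  moreover have "Cs k S (\<lambda>x. f x * dS S g x)"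
    by (rule Suc.IH) (use Suc.prems Cs_mono[OF Suc.prems(1)] in auto)
  ultimately have "Cs k S (\<lambda>x. dS S f x * g x + f x * dS S g x)" using Cs_add Suc.prems(3) by blast
  then have "Cs k S (dS S (\<lambda>x. f x * g x))" by (rule Cs_cong[OF _ Suc.prems(3)]) (simp add: e)
  with d show ?case by (simp add: e)
qed

lemma Cs_comp:
  assumes "\<forall>j. Cs j V g" "Cs k S f" "f ` S \<subseteq> V" "perf S" "perf V"
  shows "Cs k S (\<lambda>x. g (f x))"
  using assms
proof (induction k arbitrary: g f)
  case 0
  have "continuous_on V g" using 0(1) Cs.simps(1) by blast
  moreover have "continuous_on S f" using 0 by simp
  ultimately show ?case using continuous_on_compose2 0(3) by (simp only: Cs.simps(1))
next
  case (Suc k)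
  have g1: "Cs (Suc 0) V g" using Suc.prems(1) by blast
  have gd: "(g has_real_derivative dS V g y) (at y within V)" if "y \<in> V" for y
    using g1 that by (simp only: Cs.simps(2))
  have fd: "(f has_real_derivative dS S f x) (at x within S)" if "x \<in> S" for x
    using Suc.prems(2) that by (simp only: Cs.simps(2))
  have d: "((\<lambda>x. g (f x)) has_real_derivative dS S f x * dS V g (f x)) (at x within S)" if "x \<in> S" for x
  proof -
    have fx: "f x \<in> V" using Suc.prems(3) that by blast
    have "(g has_real_derivative dS V g (f x)) (at (f x) within f ` S)"
      by (rule has_field_derivative_subset[OF gd[OF fx] Suc.prems(3)])
    from DERIV_image_chain[OF this fd[OF that]] show ?thesis
      by (simp add: o_def mult.commute)
  qed
  have e: "dS S (\<lambda>x. g (f x)) x = dS S f x * dS V g (f x)" if "x \<in> S" for x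
    by (rule dS_eq[OF Suc.prems(4) that d[OF that]])
  have g': "\<forall>j. Cs j V (dS V g)"
  proof
    fix j have "Cs (Suc j) V g" using Suc.prems(1) by blast
    then show "Cs j V (dS V g)" by (simp only: Cs.simps(2))
  qed
  have fk: "Cs k S f" using Cs_mono[OF Suc.prems(2)] .
  have c1: "Cs k S (\<lambda>x. dS V g (f x))"
    by (rule Suc.IH[OF g' fk Suc.prems(3) Suc.prems(4) Suc.prems(5)])
  have c2: "Cs k S (dS S f)" using Suc.prems(2) by (simp only: Cs.simps(2))
  have "Cs k S (\<lambda>x. dS S f x * dS V g (f x))" by (rule Cs_mult[OF c2 c1 Suc.prems(4)])
  then have "Cs k S (dS S (\<lambda>x. g (f x)))" by (rule Cs_cong[OF _ Suc.prems(4)]) (simp add: e)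
  with d show ?case by (simp add: e)
qed

lemma smooth_const: "perf S \<Longrightarrow> smooth S (\<lambda>x. c)"
  unfolding smooth_def using Cs_const by blast
lemma smooth_id: "perf S \<Longrightarrow> smooth S (\<lambda>x. x)"
  unfolding smooth_def using Cs_id by blast
lemma smooth_add: "smooth S f \<Longrightarrow> smooth S g \<Longrightarrow> perf S \<Longrightarrow> smooth S (\<lambda>x. f x + g x)"
  unfolding smooth_def using Cs_add by blast
lemma smooth_mult: "smooth S f \<Longrightarrow> smooth S g \<Longrightarrow> perf S \<Longrightarrow> smooth S (\<lambda>x. f x * g x)"
  unfolding smooth_def using Cs_mult by blast
lemma smooth_comp: "smooth V g \<Longrightarrow> smooth S f \<Longrightarrow> f ` S \<subseteq> V \<Longrightarrow> perf S \<Longrightarrow> perf V \<Longrightarrow> smooth S (\<lambda>x. g (f x))"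
  unfolding smooth_def using Cs_comp by blast
lemma smooth_cong: "smooth S f \<Longrightarrow> perf S \<Longrightarrow> (\<And>x. x \<in> S \<Longrightarrow> f x = g x) \<Longrightarrow> smooth S g"
  unfolding smooth_def using Cs_cong by blast
lemma smooth_dS: "smooth S f \<Longrightarrow> smooth S (dS S f)"
  unfolding smooth_def by (metis Cs.simps(2))
lemma smooth_deriv: "smooth S f \<Longrightarrow> x \<in> S \<Longrightarrow> (f has_real_derivative dS S f x) (at x within S)"
  unfolding smooth_def by (metis Cs.simps(2))
lemma smooth_cont: "smooth S f \<Longrightarrow> continuous_on S f"
  unfolding smooth_def by (metis Cs.simps(1))
lemma smooth_cmult: "smooth S f \<Longrightarrow> perf S \<Longrightarrow> smooth S (\<lambda>x. c * f x)"
  by (rule smooth_mult[OF smooth_const]) auto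
lemma smooth_diff: "smooth S f \<Longrightarrow> smooth S g \<Longrightarrow> perf S \<Longrightarrow> smooth S (\<lambda>x. f x - g x)"
proof -
  assume a: "smooth S f" "smooth S g" "perf S"
  have "smooth S (\<lambda>x. f x + (-1) * g x)" using a by (intro smooth_add smooth_cmult) auto
  then show ?thesis by (rule smooth_cong) (use a in auto)
qed

lemma Cs_SucI:
  assumes p: "perf S" and d: "\<And>x. x \<in> S \<Longrightarrow> (f has_real_derivative f' x) (at x within S)"
    and c: "Cs k S f'"
  shows "Cs (Suc k) S f"
proof -
  have e: "dS S f x = f' x" if "x \<in> S" for x using dS_eq[OF p that d[OF that]] .
  have "Cs k S (dS S f)" by (rule Cs_cong[OF c p]) (simp add: e)
  moreover have "\<forall>x\<in>S. (f has_real_derivative dS S f x) (at x within S)"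
    using d e by simp
  ultimately show ?thesis by (simp only: Cs.simps(2))
qed

lemma smooth_Cs_deriv:
  assumes p: "perf S" and d: "\<And>x. x \<in> S \<Longrightarrow> (f has_real_derivative f' x) (at x within S)"
    and ind: "\<And>k. Cs k S f \<Longrightarrow> Cs k S f'"
  shows "smooth S f"
proof -
  have "Cs k S f" for k
  proof (induction k)
    case 0 show ?case by (simp only: Cs.simps(1)) (rule DERIV_continuous_on[OF d])
  next
    case (Suc k)
    have e: "dS S f x = f' x" if "x \<in> S" for x using dS_eq[OF p that d[OF that]] .
    have "Cs k S (dS S f)" by (rule Cs_cong[OF ind[OF Suc.IH] p]) (simp add: e)
    then show ?case using d e by simp
  qed
  then show ?thesis by (simp add: smooth_def)
qed

definition Nz :: "real set" where "Nz = {x. x \<noteq> 0}"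

lemma open_Nz: "open Nz"
proof -
  have "Nz = - {0}" by (auto simp: Nz_def)
  then show ?thesis using open_Compl[OF closed_singleton[of "0::real"]] by simp
qed

lemma smooth_inverse: "smooth Nz inverse"
proof -
  have p: "perf Nz" by (rule perf_open[OF open_Nz])
  have "Cs k Nz inverse" for k
  proof (induction k)
    case 0 then show ?case by (simp add: Nz_def continuous_on_inverse continuous_on_id)
  next
    case (Suc k)
    have d: "(inverse has_real_derivative (-1) * (inverse x * inverse x)) (at x within Nz)" if "x \<in> Nz" for x
      using DERIV_inverse[of x Nz] that by (simp add: Nz_def power2_eq_square)
    have "Cs k Nz (\<lambda>x. (-1) * (inverse x * inverse x))"
      by (intro Cs_mult Cs_const p Suc.IH)
    then show ?case by (intro Cs_SucI[where f'="\<lambda>x. (-1) * (inverse x * inverse x)", OF p]) (use d in auto)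
  qed
  then show ?thesis by (simp add: smooth_def)
qed

lemma smooth_inv_comp: "smooth S f \<Longrightarrow> perf S \<Longrightarrow> (\<And>x. x \<in> S \<Longrightarrow> f x \<noteq> 0) \<Longrightarrow> smooth S (\<lambda>x. inverse (f x))"
  using perf_open[OF open_Nz] by (intro smooth_comp[OF smooth_inverse]) (auto simp: Nz_def)

lemma smooth_sqrt: "smooth {0<..} sqrt"
proof -
  have p: "perf {0::real<..}" by (rule perf_open) simp
  have "Cs k {0<..} sqrt" for k
  proof (induction k)
    case 0 then show ?case by (simp add: continuous_on_real_sqrt continuous_on_id)
  next
    case (Suc k)
    have d: "(sqrt has_real_derivative (1/2) * inverse (sqrt x)) (at x within {0<..})" if "x \<in> {0<..}" for x
      using DERIV_real_sqrt[of x] that by (auto intro: has_field_derivative_at_within)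
    have "Cs k {0<..} (\<lambda>x. inverse (sqrt x))"
      by (rule Cs_comp[OF _ Suc.IH]) (use smooth_inverse perf_open[OF open_Nz] in \<open>auto simp: smooth_def Nz_def p\<close>)
    then have "Cs k {0<..} (\<lambda>x. (1/2) * inverse (sqrt x))" by (intro Cs_mult Cs_const p)
    then show ?case by (intro Cs_SucI[where f'="\<lambda>x. (1/2) * inverse (sqrt x)", OF p]) (use d in auto)
  qed
  then show ?thesis by (simp add: smooth_def)
qed

lemma cubic_strict_mono:
  fixes s1 s2 :: real
  assumes "2/3 < s1" "s1 < s2"
  shows "s1^3 - s1^2 < s2^3 - s2^2"
proof -
  define e1 where "e1 = s1 - 2/3"
  define e2 where "e2 = s2 - 2/3"
  have e1: "e1 > 0" and e2: "e2 > 0" using assms by (auto simp: e1_def e2_def)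
  have q: "s1^2 + s1 * s2 + s2^2 - s1 - s2 = e1 + e2 + e1^2 + e1 * e2 + e2^2"
    by (simp add: e1_def e2_def power2_eq_square algebra_simps)
  have "e1 + e2 + e1^2 + e1 * e2 + e2^2 > 0" using e1 e2 by (simp add: add_pos_pos)
  then have qpos: "s1^2 + s1 * s2 + s2^2 - s1 - s2 > 0" using q by simp
  have "s2^3 - s2^2 - (s1^3 - s1^2) = (s2 - s1) * (s1^2 + s1 * s2 + s2^2 - s1 - s2)"
    by (simp add: power2_eq_square power3_eq_cube algebra_simps)
  also have "\<dots> > 0" using assms qpos by simp
  finally show ?thesis by simp
qed

lemma cubic_inj:
  fixes s1 s2 :: real
  assumes "2/3 < s1" "2/3 < s2" "s1^3 - s1^2 = s2^3 - s2^2"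
  shows "s1 = s2"
  using cubic_strict_mono[of s1 s2] cubic_strict_mono[of s2 s1] assms
  by (cases s1 s2 rule: linorder_cases) auto

lemma sigma0_eq:
  fixes r s :: real
  assumes "2/3 < s" "s^3 - s^2 + r = 0"
  shows "sigma0 r = s"
  unfolding sigma0_def
proof (rule Greatest_equality)
  show "s^3 - s^2 + r = 0" by fact
  fix y :: real assume y: "y^3 - y^2 + r = 0"
  show "y \<le> s"
  proof (rule ccontr)
    assume "\<not> y \<le> s"
    then have "s < y" by simp
    then show False using cubic_strict_mono[OF assms(1) \<open>s<y\<close>] y assms(2) by simp
  qed
qed

lemma sigma0_exists:
  fixes r :: real
  assumes "r < r0"
  shows "\<exists>s>2/3. s^3 - s^2 + r = 0"
proof -
  define f where "f s = s^3 - s^2 + r" for s :: real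
  define b where "b = 2 + \<bar>r\<bar>"
  have fa: "f (2/3) < 0" using assms by (simp add: f_def r0_def power3_eq_cube power2_eq_square)
  have b1: "b \<ge> 2" by (simp add: b_def)
  have "b^2 * 1 \<le> b^2 * (b - 1)" using b1 by (intro mult_left_mono) auto
  moreover have "b * 1 \<le> b * b" using b1 by (intro mult_left_mono) auto
  ultimately have "b \<le> b^2 * (b - 1)" by (simp add: power2_eq_square)
  then have fb: "f b \<ge> 0" by (simp add: f_def b_def power2_eq_square power3_eq_cube algebra_simps)
  have "continuous_on {2/3..b} f" unfolding f_def by (intro continuous_intros)
  from IVT'[of f "2/3" 0 b, OF _ fb _ this] fa b1
  obtain x where x: "2/3 \<le> x" "x \<le> b" "f x = 0" by auto
  have "x \<noteq> 2/3"
  proof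
    assume "x = 2/3" then have "f x = f (2/3)" by (rule arg_cong)
    with fa x(3) show False by simp
  qed
  with x show ?thesis by (intro exI[of _ x]) (auto simp: f_def)
qed

lemma sigma0_props:
  fixes r :: real
  assumes "r < r0"
  shows "sigma0 r > 2/3" "(sigma0 r)^3 - (sigma0 r)^2 + r = 0"
proof -
  obtain s where s: "s > 2/3" "s^3 - s^2 + r = 0" using sigma0_exists[OF assms] by auto
  have "sigma0 r = s" by (rule sigma0_eq[OF s])
  with s show "sigma0 r > 2/3" "(sigma0 r)^3 - (sigma0 r)^2 + r = 0" by auto
qed

lemma sigma0_zero: "sigma0 0 = 1"
  by (rule sigma0_eq) auto

lemma sigma0_deriv:
  fixes r :: real
  assumes r: "r < r0"
  shows "(sigma0 has_real_derivative inverse (2 * sigma0 r - 3 * (sigma0 r)^2)) (at r)"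
proof -
  define \<sigma> where "\<sigma> = sigma0 r"
  have s: "\<sigma> > 2/3" "\<sigma>^3 - \<sigma>^2 + r = 0" using sigma0_props[OF r] by (auto simp: \<sigma>_def)
  define f where "f s = s^2 - s^3" for s :: real
  have fs: "f \<sigma> = r" using s by (simp add: f_def)
  define d where "d = (\<sigma> - 2/3) / 2"
  have d: "d > 0" using s by (simp add: d_def)
  have inj: "sigma0 (f z) = z" if "\<bar>z - \<sigma>\<bar> \<le> d" for z
  proof (rule sigma0_eq)
    have "-(z - \<sigma>) \<le> d" using that abs_le_iff by blast
    then have "2 * (\<sigma> - z) \<le> \<sigma> - 2/3" unfolding d_def by simp
    then show "2/3 < (z::real)" using s(1) by argo
    show "z^3 - z^2 + f z = 0" by (simp add: f_def)
  qed
  have cf: "isCont f z" for z unfolding f_def[abs_def] by (intro continuous_intros)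
  have "isCont sigma0 (f \<sigma>)"
    apply (rule isCont_inverse_function[where d=d and x=\<sigma> and f=f and g=sigma0])
    using d inj cf by auto
  then have cont: "isCont sigma0 r" using fs by simp
  have der: "(f has_real_derivative (2 * \<sigma> - 3 * \<sigma>^2)) (at (sigma0 r))"
    unfolding f_def \<sigma>_def by (auto intro!: derivative_eq_intros simp: power2_eq_square)
  have neq: "2 * \<sigma> - 3 * \<sigma>^2 \<noteq> 0"
  proof -
    have "2 * \<sigma> - 3 * \<sigma>^2 = \<sigma> * (2 - 3 * \<sigma>)" by (simp add: power2_eq_square algebra_simps)
    moreover have "\<sigma> * (2 - 3 * \<sigma>) < 0" using s by (intro mult_pos_neg) auto
    ultimately have "2 * \<sigma> - 3 * \<sigma>^2 < 0" by simp
    then show ?thesis by (rule less_imp_neq)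
  qed
  have "(sigma0 has_real_derivative inverse (2 * \<sigma> - 3 * \<sigma>^2)) (at r)"
  proof (rule DERIV_inverse_function[where f=f and g=sigma0 and x=r and a="r - 1" and b=r0, OF der neq])
    show "r - 1 < r" "r < r0" using r by auto
    fix y assume "r - 1 < y" "y < r0"
    then show "f (sigma0 y) = y" using sigma0_props[of y] by (simp add: f_def)
  qed (rule cont)
  then show ?thesis by (simp add: \<sigma>_def)
qed

definition Ssig :: "real set" where "Ssig = {..<r0}"

lemma smooth_sigma0: "smooth Ssig sigma0"
proof -
  have p: "perf Ssig" by (rule perf_open) (simp add: Ssig_def)
  define V where "V = {(2/3::real)<..}"
  have pV: "perf V" by (rule perf_open) (simp add: V_def)
  define q where "q s = inverse (2 * s - 3 * s^2)" for s :: real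
  have sq: "smooth V q"
  proof -
    have "smooth V (\<lambda>s. 2 * s - 3 * (s * s))"
      by (intro smooth_diff smooth_cmult smooth_mult smooth_id pV)
    then have "smooth V (\<lambda>s. inverse (2 * s - 3 * (s * s)))"
    proof (rule smooth_inv_comp[OF _ pV])
      fix s assume "s \<in> V"
      then have "s > 2/3" by (simp add: V_def)
      have "2 * s - 3 * (s * s) = s * (2 - 3 * s)" by (simp add: algebra_simps)
      moreover have "s * (2 - 3 * s) < 0" using \<open>s > 2/3\<close> by (intro mult_pos_neg) auto
      ultimately have "2 * s - 3 * (s * s) < 0" by simp
      then show "2 * s - 3 * (s * s) \<noteq> 0" by (rule less_imp_neq)
    qed
    then show ?thesis by (rule smooth_cong[OF _ pV]) (simp add: q_def power2_eq_square)
  qed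
  have d: "(sigma0 has_real_derivative q (sigma0 x)) (at x within Ssig)" if "x \<in> Ssig" for x
    using sigma0_deriv[of x] that by (auto simp: Ssig_def q_def intro: has_field_derivative_at_within)
  have img: "sigma0 ` Ssig \<subseteq> V" using sigma0_props by (auto simp: Ssig_def V_def)
  have "Cs k Ssig sigma0" for k
  proof (induction k)
    case 0 show ?case by (simp only: Cs.simps(1)) (rule DERIV_continuous_on[OF d])
  next
    case (Suc k)
    have "Cs k Ssig (\<lambda>x. q (sigma0 x))"
      by (rule Cs_comp[OF _ Suc.IH img p pV]) (use sq in \<open>simp add: smooth_def\<close>)
    then show ?case by (intro Cs_SucI[where f'="\<lambda>x. q (sigma0 x)", OF p]) (use d in auto)
  qed
  then show ?thesis by (simp add: smooth_def)
qed

lemma deriv_pow_inv: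
  fixes a c r :: real
  assumes A: "a + r > 0"
  shows "((\<lambda>r. c / (a + r) ^ Suc n) has_real_derivative (- real (Suc n)) * c / (a + r) ^ Suc (Suc n)) (at r within S)"
proof -
  define A where "A = a + r"
  have Ap: "A > 0" using A by (simp add: A_def)
  have g: "((\<lambda>r. (a + r) ^ Suc n) has_real_derivative real (Suc n) * A ^ n) (at r within S)"
    unfolding A_def
    using DERIV_power[OF DERIV_ident[THEN DERIV_add[OF DERIV_const[of a]]], of "Suc n" r S]
    by simp
  have nz: "(a + r) ^ Suc n \<noteq> 0" using A by simp
  from DERIV_quotient[OF DERIV_const g nz, of c]
  have d: "((\<lambda>r. c / (a + r) ^ Suc n) has_real_derivative
      (0 * A ^ Suc n - real (Suc n) * A ^ n * c) / (A ^ Suc n) ^ Suc (Suc 0)) (at r within S)"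
    by (simp only: A_def)
  have e1: "(A ^ Suc n) ^ Suc (Suc 0) = A ^ n * A ^ Suc (Suc n)"
  proof -
    have "(A ^ Suc n) ^ Suc (Suc 0) = A ^ Suc n * A ^ Suc n" by simp
    also have "\<dots> = A ^ (Suc n + Suc n)" by (rule power_add[symmetric])
    also have "\<dots> = A ^ (n + Suc (Suc n))" by simp
    also have "\<dots> = A ^ n * A ^ Suc (Suc n)" by (rule power_add)
    finally show ?thesis .
  qed
  have An: "A ^ n \<noteq> 0" "A ^ Suc (Suc n) \<noteq> 0" using Ap by auto
  have eqn: "(0 * A ^ Suc n - real (Suc n) * A ^ n * c) / (A ^ Suc n) ^ Suc (Suc 0)
        = (- real (Suc n)) * c / A ^ Suc (Suc n)"
    unfolding e1 using An by (simp add: field_simps)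
  from d[unfolded eqn] show ?thesis unfolding A_def .
qed

locale setting =
  fixes l tb :: real and h :: "real \<Rightarrow> real"
  assumes l_pos: "l > 0" and tb_pos: "tb > 0"
    and h_cont: "continuous_on {-l..l} h"
    and h_pos: "\<forall>x\<in>{-l..l}. h x > 0"
begin

definition hm :: real where "hm = Inf (h ` {-l..l})"
definition Ua :: "real set" where "Ua = {-hm<..}"

lemma compact_img: "compact (h ` {-l..l})"
  by (rule compact_continuous_image[OF h_cont]) simp

lemma hm_le: "x \<in> {-l..l} \<Longrightarrow> hm \<le> h x"
  unfolding hm_def
  by (rule cInf_lower) (auto intro!: bounded_imp_bdd_below compact_imp_bounded compact_img)

lemma hm_in: "hm \<in> h ` {-l..l}"
  unfolding hm_def
  by (rule closed_contains_Inf) (use l_pos in \<open>auto intro!: bounded_imp_bdd_below compact_imp_bounded compact_imp_closed compact_img\<close>)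

lemma hm_pos: "hm > 0" using hm_in h_pos by auto

lemma Ua_pos: "r \<in> Ua \<Longrightarrow> x \<in> {-l..l} \<Longrightarrow> h x + r > 0"
  using hm_le[of x] by (auto simp: Ua_def)

lemma Ua_nz: "r \<in> Ua \<Longrightarrow> -l \<le> x \<Longrightarrow> x \<le> l \<Longrightarrow> h x + r = 0 \<Longrightarrow> False"
  using Ua_pos[of r x] by auto

lemma Ua_iff: "r \<in> Ua \<longleftrightarrow> (\<forall>x\<in>{-l..l}. h x + r > 0)"
proof
  assume "\<forall>x\<in>{-l..l}. h x + r > 0"
  then show "r \<in> Ua" using hm_in by (auto simp: Ua_def)
qed (use Ua_pos in auto)

lemma open_Ua: "open Ua" by (simp add: Ua_def)
lemma perf_Ua: "perf Ua" by (rule perf_open[OF open_Ua])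
lemma convex_Ua: "convex Ua" by (simp add: Ua_def)

definition J :: "nat \<Rightarrow> real \<Rightarrow> real" where
  "J n r = integral {-l..l} (\<lambda>x. x^2 / (h x + r) ^ Suc n)"

lemma cont_integrand:
  assumes "r \<in> Ua"
  shows "continuous_on {-l..l} (\<lambda>x. c * x^2 / (h x + r) ^ m)"
proof -
  have "continuous_on {-l..l} (\<lambda>x. h x + r)" by (intro continuous_intros h_cont)
  moreover have nz: "\<forall>x\<in>{-l..l}. (h x + r) ^ m \<noteq> 0" using Ua_pos[OF assms] by force
  ultimately show ?thesis
    by (intro continuous_on_divide continuous_intros h_cont) auto
qed

lemma J_deriv:
  assumes r: "r \<in> Ua"
  shows "(J n has_real_derivative (- real (Suc n)) * J (Suc n) r) (at r within Ua)"
proof -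
  have fx: "((\<lambda>r. x^2 / (h x + r) ^ Suc n) has_real_derivative
            (- real (Suc n)) * x^2 / (h x + r) ^ Suc (Suc n)) (at r within Ua)"
    if "r \<in> Ua" "x \<in> cbox (-l) l" for r x
  proof -
    have pos: "h x + r > 0" using Ua_pos that by auto
    from deriv_pow_inv[of "h x" r "x^2" n Ua] pos
    show ?thesis by simp
  qed
  have int: "(\<lambda>x. x^2 / (h x + r) ^ Suc n) integrable_on cbox (-l) l" if "r \<in> Ua" for r
    using integrable_continuous_interval[OF cont_integrand[OF that, of 1 "Suc n"]] by simp
  have cont: "continuous_on (Ua \<times> cbox (-l) l) (\<lambda>(r, x). (- real (Suc n)) * x^2 / (h x + r) ^ Suc (Suc n))"
  proof -
    have hc: "continuous_on (Ua \<times> {-l..l}) (\<lambda>p. h (snd p))"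
      by (rule continuous_on_compose2[OF h_cont continuous_on_snd]) auto
    have "continuous_on (Ua \<times> {-l..l}) (\<lambda>p. (- real (Suc n)) * (snd p)^2 / (h (snd p) + fst p) ^ Suc (Suc n))"
    proof (rule continuous_on_divide)
      show "continuous_on (Ua \<times> {-l..l}) (\<lambda>p. (- real (Suc n)) * (snd p)^2)"
        by (intro continuous_intros)
      show "continuous_on (Ua \<times> {-l..l}) (\<lambda>p. (h (snd p) + fst p) ^ Suc (Suc n))"
        by (intro continuous_intros hc)
      show "\<forall>p\<in>Ua \<times> {-l..l}. (h (snd p) + fst p) ^ Suc (Suc n) \<noteq> 0"
      proof
        fix p assume p: "p \<in> Ua \<times> {-l..l}"
        then have "h (snd p) + fst p > 0" using Ua_pos[of "fst p" "snd p"] by (simp add: mem_Times_iff)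
        then show "(h (snd p) + fst p) ^ Suc (Suc n) \<noteq> 0" by simp
      qed
    qed
    then show ?thesis by (simp add: split_beta)
  qed
  from leibniz_rule_field_derivative[of Ua "-l" l "\<lambda>r x. x^2 / (h x + r) ^ Suc n", OF fx int cont r convex_Ua]
  have "((\<lambda>r. integral (cbox (-l) l) (\<lambda>x. x^2 / (h x + r) ^ Suc n)) has_real_derivative
        integral (cbox (-l) l) (\<lambda>x. (- real (Suc n)) * x^2 / (h x + r) ^ Suc (Suc n))) (at r within Ua)"
    by simp
  moreover have eq: "\<And>x. (- real (Suc n)) * x^2 / (h x + r) ^ Suc (Suc n) = (- real (Suc n)) * (x^2 / (h x + r) ^ Suc (Suc n))"
    by (simp only: times_divide_eq_right)
  ultimately show ?thesis unfolding eq integral_mult_right J_def[abs_def] by simp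
qed

lemma smooth_J: "smooth Ua (J n)"
proof -
  have "Cs k Ua (J n)" for k
  proof (induction k arbitrary: n)
    case 0 show ?case by (simp only: Cs.simps(1)) (rule DERIV_continuous_on[OF J_deriv])
  next
    case (Suc k)
    have "Cs k Ua (\<lambda>r. (- real (Suc n)) * J (Suc n) r)"
      by (intro Cs_mult Cs_const perf_Ua Suc.IH)
    then show ?case
      by (intro Cs_SucI[where f'="\<lambda>r. (- real (Suc n)) * J (Suc n) r", OF perf_Ua]) (use J_deriv in auto)
  qed
  then show ?thesis by (simp add: smooth_def)
qed

lemma J_nonneg:
  assumes r: "r \<in> Ua" shows "J 0 r \<ge> 0"
proof -
  have nn: "0 \<le> x^2 / (h x + r)" if "x \<in> {-l..l}" for x using Ua_pos[OF r that] by simp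
  have "J 0 r = integral {-l..l} (\<lambda>x. 1 * x^2 / (h x + r) ^ 1)" by (simp add: J_def)
  also have "\<dots> \<ge> 0"
    by (rule Henstock_Kurzweil_Integration.integral_nonneg[OF integrable_continuous_interval[OF cont_integrand[OF r]]])
       (use nn in simp)
  finally show ?thesis .
qed

lemma tau0_J: "r \<in> Ua \<Longrightarrow> tau0 l tb h r = sqrt (tb^2 + 1 / (2 * l) * J 0 r)"
  by (simp add: tau0_def J_def)

lemma smooth_tau0: "smooth Ua (tau0 l tb h)"
proof -
  have "smooth Ua (\<lambda>r. tb^2 + 1 / (2 * l) * J 0 r)"
    by (intro smooth_add smooth_const smooth_cmult smooth_J perf_Ua)
  moreover have "(\<lambda>r. tb^2 + 1 / (2 * l) * J 0 r) ` Ua \<subseteq> {0<..}"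
    using J_nonneg tb_pos l_pos by (auto intro!: add_pos_nonneg)
  moreover have pp: "perf {0::real<..}" by (rule perf_open) simp
  ultimately have "smooth Ua (\<lambda>r. sqrt (tb^2 + 1 / (2 * l) * J 0 r))"
    using smooth_comp[OF smooth_sqrt _ _ perf_Ua pp] by blast
  then show ?thesis by (rule smooth_cong[OF _ perf_Ua]) (simp add: tau0_J)
qed

lemma tau0_ge: "r \<in> Ua \<Longrightarrow> tau0 l tb h r \<ge> tb"
proof -
  assume r: "r \<in> Ua"
  have "tb^2 \<le> tb^2 + 1 / (2 * l) * J 0 r" using J_nonneg[OF r] l_pos by simp
  then have "sqrt (tb^2) \<le> sqrt (tb^2 + 1 / (2 * l) * J 0 r)" by (rule real_sqrt_le_mono)
  then show ?thesis using tb_pos r by (simp add: tau0_J)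
qed

lemma tau0_pos: "r \<in> Ua \<Longrightarrow> tau0 l tb h r > 0"
  using tau0_ge tb_pos by fastforce

lemma tau0_antimono:
  assumes "r1 \<in> Ua" "r2 \<in> Ua" "r1 \<le> r2"
  shows "tau0 l tb h r2 \<le> tau0 l tb h r1"
proof -
  have "J 0 r2 \<le> J 0 r1"
    unfolding J_def
  proof (rule integral_le)
    show "(\<lambda>x. x^2 / (h x + r2) ^ Suc 0) integrable_on {-l..l}"
      using integrable_continuous_interval[OF cont_integrand[OF assms(2), of 1 1]] by simp
    show "(\<lambda>x. x^2 / (h x + r1) ^ Suc 0) integrable_on {-l..l}"
      using integrable_continuous_interval[OF cont_integrand[OF assms(1), of 1 1]] by simp
    fix x assume x: "x \<in> {-l..l}"
    have "h x + r1 > 0" using Ua_pos[OF assms(1) x] .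
    then show "x^2 / (h x + r2) ^ Suc 0 \<le> x^2 / (h x + r1) ^ Suc 0"
      using assms(3) by (simp add: divide_left_mono)
  qed
  then have "tb^2 + 1 / (2 * l) * J 0 r2 \<le> tb^2 + 1 / (2 * l) * J 0 r1"
    using l_pos by (simp add: divide_right_mono)
  then show ?thesis using assms by (simp add: tau0_J real_sqrt_le_mono)
qed

lemma tau0_deriv:
  assumes "r \<in> Ua"
  shows "(tau0 l tb h has_real_derivative tau0' l tb h r) (at r)"
proof -
  have d: "(tau0 l tb h has_real_derivative dS Ua (tau0 l tb h) r) (at r)"
    using smooth_deriv[OF smooth_tau0 assms] at_within_open[OF assms open_Ua] by simp
  then have "deriv (tau0 l tb h) r = dS Ua (tau0 l tb h) r" by (rule DERIV_imp_deriv)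
  with d show ?thesis by (simp add: tau0'_def)
qed

lemma smooth_tau0': "smooth Ua (tau0' l tb h)"
proof -
  have "smooth Ua (dS Ua (tau0 l tb h))" by (rule smooth_dS[OF smooth_tau0])
  then show ?thesis
  proof (rule smooth_cong[OF _ perf_Ua])
    fix r assume r: "r \<in> Ua"
    have "(tau0 l tb h has_real_derivative dS Ua (tau0 l tb h) r) (at r)"
      using smooth_deriv[OF smooth_tau0 r] at_within_open[OF r open_Ua] by simp
    then have "deriv (tau0 l tb h) r = dS Ua (tau0 l tb h) r" by (rule DERIV_imp_deriv)
    then show "dS Ua (tau0 l tb h) r = tau0' l tb h r" by (simp add: tau0'_def)
  qed
qed

end

definition Ub :: "real \<Rightarrow> real set" where "Ub l = {y. l * y < 2 * r0}"

lemma gamma_rel: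
  fixes l y :: real
  assumes l: "l > 0" and y: "l * y < 2 * r0"
  defines "\<sigma> \<equiv> sigma0 (l * y / 2)"
  shows "\<sigma> > 2/3" "l * y = 2 * \<sigma>^2 - 2 * \<sigma>^3"
proof -
  have r: "l * y / 2 < r0" using y by simp
  show "\<sigma> > 2/3" using sigma0_props(1)[OF r] by (simp add: \<sigma>_def)
  have "\<sigma>^3 - \<sigma>^2 + l * y / 2 = 0" using sigma0_props(2)[OF r] by (simp add: \<sigma>_def)
  then show "l * y = 2 * \<sigma>^2 - 2 * \<sigma>^3" by (simp add: field_simps)
qed

lemma gamma_alt:
  fixes l y :: real
  assumes l: "l > 0" and y: "l * y < 2 * r0"
  shows "gamma l y = l^2 / 4 * (2 * sigma0 (l * y / 2) - 1) * (inverse (sigma0 (l * y / 2)))^4"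
proof -
  define \<sigma> where "\<sigma> = sigma0 (l * y / 2)"
  have s: "\<sigma> > 2/3" "l * y = 2 * \<sigma>^2 - 2 * \<sigma>^3" using gamma_rel[OF l y] by (auto simp: \<sigma>_def)
  have snz: "\<sigma> \<noteq> 0" using s by auto
  show ?thesis
  proof (cases "y = 0")
    case True
    then show ?thesis by (simp add: gamma_def sigma0_zero)
  next
    case False
    have num: "- (\<sigma> - 1) * (3 * \<sigma> - 1) - l * y = (1 - \<sigma>)^2 * (2 * \<sigma> - 1)"
      unfolding s(2) by (simp add: algebra_simps power2_eq_square power3_eq_cube)
    have e2: "(l * y)^2 = 4 * \<sigma>^4 * (1 - \<sigma>)^2"
      unfolding s(2) by algebra
    have "y^2 * (l^2 / 4 * (2 * \<sigma> - 1) * (inverse \<sigma>)^4) = (l * y)^2 / 4 * (2 * \<sigma> - 1) * (inverse \<sigma>)^4"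
      by (simp add: power_mult_distrib)
    also have "\<dots> = (1 - \<sigma>)^2 * (2 * \<sigma> - 1) * (\<sigma>^4 * (inverse \<sigma>)^4)"
      unfolding e2 by (simp add: algebra_simps)
    also have "\<sigma>^4 * (inverse \<sigma>)^4 = 1" using snz by (simp add: power_mult_distrib[symmetric])
    finally have "y^2 * (l^2 / 4 * (2 * \<sigma> - 1) * (inverse \<sigma>)^4) = - (\<sigma> - 1) * (3 * \<sigma> - 1) - l * y"
      using num by simp
    then have eqn: "y^2 * (l^2 / 4 * (2 * \<sigma> - 1) * (inverse \<sigma>)^4) = - (\<sigma> - 1) * (3 * \<sigma> - 1) - l * y" .
    have "l^2 / 4 * (2 * \<sigma> - 1) * (inverse \<sigma>)^4 = (y^2 * (l^2 / 4 * (2 * \<sigma> - 1) * (inverse \<sigma>)^4)) / y^2"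
      using False by simp
    also have "\<dots> = (- (\<sigma> - 1) * (3 * \<sigma> - 1) - l * y) / y^2" by (simp only: eqn)
    also have "\<dots> = gamma l y" using False by (simp add: gamma_def \<sigma>_def)
    finally show ?thesis by (simp add: \<sigma>_def)
  qed
qed

lemma gamma_pos:
  fixes l y :: real
  assumes l: "l > 0" and y: "l * y < 2 * r0"
  shows "l + y * gamma l y > 0"
proof -
  define \<sigma> where "\<sigma> = sigma0 (l * y / 2)"
  have s: "\<sigma> > 2/3" "l * y = 2 * \<sigma>^2 - 2 * \<sigma>^3" using gamma_rel[OF l y] by (auto simp: \<sigma>_def)
  have snz: "\<sigma> \<noteq> 0" using s by auto
  have "y * gamma l y = y * (l^2 / 4 * (2 * \<sigma> - 1) * (inverse \<sigma>)^4)"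
    by (simp add: gamma_alt[OF l y] \<sigma>_def)
  also have "\<dots> = (l * y) * (l / 4 * (2 * \<sigma> - 1) * (inverse \<sigma>)^4)"
    by (simp add: power2_eq_square field_simps)
  also have "\<dots> = l * (1 - \<sigma>) * (2 * \<sigma> - 1) / (2 * \<sigma>^2)"
    unfolding s(2) using snz by (simp add: field_simps power2_eq_square power3_eq_cube power4_eq_xxxx)
  finally have "l + y * gamma l y = l * (3 * \<sigma> - 1) / (2 * \<sigma>^2)"
    using snz by (simp add: field_simps power2_eq_square)
  also have "\<dots> > 0" using l s(1) snz by (intro divide_pos_pos mult_pos_pos) auto
  finally show ?thesis .
qed

lemma open_Ub: "open (Ub l)"
  unfolding Ub_def by (intro open_Collect_less continuous_intros)

lemma smooth_gamma:
  fixes l :: real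
  assumes l: "l > 0"
  shows "smooth (Ub l) (gamma l)"
proof -
  have p: "perf (Ub l)" by (rule perf_open[OF open_Ub])
  have pS: "perf Ssig" by (rule perf_open) (simp add: Ssig_def)
  have lin: "smooth (Ub l) (\<lambda>y. l * y / 2)"
    by (rule smooth_cong[OF smooth_cmult[OF smooth_id[OF p] p, of "l/2"] p]) simp
  have img: "(\<lambda>y. l * y / 2) ` Ub l \<subseteq> Ssig" by (auto simp: Ub_def Ssig_def)
  define s where "s y = sigma0 (l * y / 2)" for y
  have ss: "smooth (Ub l) s"
    unfolding s_def by (rule smooth_comp[OF smooth_sigma0 lin img p pS])
  have snz: "s y \<noteq> 0" if "y \<in> Ub l" for y
    using gamma_rel(1)[OF l, of y] that by (auto simp: s_def Ub_def)
  have si: "smooth (Ub l) (\<lambda>y. inverse (s y))" by (rule smooth_inv_comp[OF ss p snz])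
  have "smooth (Ub l) (\<lambda>y. l^2 / 4 * (2 * s y - 1) * (inverse (s y) * inverse (s y) * inverse (s y) * inverse (s y)))"
    by (intro smooth_mult smooth_cmult smooth_diff smooth_const si ss p)
  then show ?thesis
  proof (rule smooth_cong[OF _ p])
    fix y assume "y \<in> Ub l"
    then have "l * y < 2 * r0" by (simp add: Ub_def)
    then show "l^2 / 4 * (2 * s y - 1) * (inverse (s y) * inverse (s y) * inverse (s y) * inverse (s y)) = gamma l y"
      using gamma_alt[OF l] by (simp add: s_def power4_eq_xxxx)
  qed
qed

definition clmp :: "real \<Rightarrow> real \<Rightarrow> real" where "clmp A x = max (- A) (min A x)"

lemma clmp_lip: "\<bar>clmp A x - clmp A y\<bar> \<le> \<bar>x - y\<bar>"
  unfolding clmp_def by (simp add: max_def min_def abs_if)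

lemma clmp_range: "A \<ge> 0 \<Longrightarrow> \<bar>clmp A x\<bar> \<le> A"
  unfolding clmp_def by (simp add: max_def min_def abs_if)

lemma clmp_id: "\<bar>x\<bar> \<le> A \<Longrightarrow> clmp A x = x"
  unfolding clmp_def by (simp add: abs_le_iff min_absorb2 max_absorb2)

lemma clmp_deriv:
  assumes "\<bar>x\<bar> < A"
  shows "(clmp A has_real_derivative 1) (at x)"
proof (rule has_field_derivative_transform_within_open[where S="{-A<..<A}"])
  show "((\<lambda>x. x) has_real_derivative 1) (at x)" by (rule DERIV_ident)
  show "open {-A<..<A}" by simp
  show "x \<in> {-A<..<A}" using assms by auto
  fix y :: real assume "y \<in> {-A<..<A}"
  then show "y = clmp A y" by (intro clmp_id[symmetric]) auto
qed

lemma BL_comp: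
  fixes g m :: "real \<Rightarrow> real"
  assumes g: "smooth V g" and V: "open V" and cd: "{c..d} \<subseteq> V"
    and m: "\<And>x. m x \<in> {c..d}" and K: "K \<ge> 0" "\<And>x y. \<bar>m x - m y\<bar> \<le> K * \<bar>x - y\<bar>"
  shows "\<exists>M L. \<forall>x y. \<bar>g (m x)\<bar> \<le> M \<and> \<bar>g (m x) - g (m y)\<bar> \<le> L * \<bar>x - y\<bar>"
proof -
  have pV: "perf V" by (rule perf_open[OF V])
  have gc: "continuous_on {c..d} g" using smooth_cont[OF g] cd by (rule continuous_on_subset)
  have "bounded (g ` {c..d})" by (rule compact_imp_bounded[OF compact_continuous_image[OF gc]]) simp
  then obtain M where M: "\<And>z. z \<in> {c..d} \<Longrightarrow> \<bar>g z\<bar> \<le> M" unfolding bounded_iff by fastforce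
  have g'c: "continuous_on {c..d} (dS V g)" using smooth_cont[OF smooth_dS[OF g]] cd by (rule continuous_on_subset)
  have "bounded (dS V g ` {c..d})" by (rule compact_imp_bounded[OF compact_continuous_image[OF g'c]]) simp
  then obtain L0 where L0: "\<And>z. z \<in> {c..d} \<Longrightarrow> \<bar>dS V g z\<bar> \<le> L0" unfolding bounded_iff by fastforce
  have L0pos: "L0 \<ge> 0" using L0[of "m 0"] m[of 0] by linarith
  have lip: "\<bar>g u - g v\<bar> \<le> L0 * \<bar>u - v\<bar>" if "u \<in> {c..d}" "v \<in> {c..d}" for u v
  proof -
    have "norm (g u - g v) \<le> L0 * norm (u - v)"
    proof (rule field_differentiable_bound[of "{c..d}" g "dS V g"])
      show "convex {c..d}" by simp
      fix z :: real assume z: "z \<in> {c..d}"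
      show "(g has_field_derivative dS V g z) (at z within {c..d})"
        using has_field_derivative_subset[OF smooth_deriv[OF g] cd] z cd by blast
      show "norm (dS V g z) \<le> L0" using L0[OF z] by simp
    qed (use that in auto)
    then show ?thesis by simp
  qed
  show ?thesis
  proof (rule exI[of _ M], rule exI[of _ "L0 * K"], intro allI conjI)
    fix x y
    show "\<bar>g (m x)\<bar> \<le> M" using M m by blast
    have "\<bar>g (m x) - g (m y)\<bar> \<le> L0 * \<bar>m x - m y\<bar>" using lip m by blast
    also have "\<dots> \<le> L0 * (K * \<bar>x - y\<bar>)" using K L0pos by (intro mult_left_mono) auto
    finally show "\<bar>g (m x) - g (m y)\<bar> \<le> L0 * K * \<bar>x - y\<bar>" by (simp add: mult.assoc)
  qed
qed

definition BL2 :: "(real \<Rightarrow> real \<Rightarrow> real) \<Rightarrow> bool" where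
  "BL2 f \<longleftrightarrow> (\<exists>M L. \<forall>a b a' b'. \<bar>f a b\<bar> \<le> M \<and> \<bar>f a b - f a' b'\<bar> \<le> L * (\<bar>a - a'\<bar> + \<bar>b - b'\<bar>))"

lemma BL2_const: "BL2 (\<lambda>a b. c)"
  unfolding BL2_def by (intro exI[of _ "\<bar>c\<bar>"] exI[of _ 0]) auto

lemma BL2_fst:
  assumes "\<exists>M L. \<forall>x y. \<bar>g x\<bar> \<le> M \<and> \<bar>g x - g y\<bar> \<le> L * \<bar>x - y\<bar>"
  shows "BL2 (\<lambda>a b. g a)"
proof -
  obtain M L where HML: "\<And>x y. \<bar>g x\<bar> \<le> M" "\<And>x y. \<bar>g x - g y\<bar> \<le> L * \<bar>x - y\<bar>" using assms by blast
  have L: "L \<ge> 0" using HML(2)[of 1 0] by simp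
  show ?thesis unfolding BL2_def
  proof (rule exI[of _ M], rule exI[of _ L], intro allI conjI)
    fix a b a' b' :: real
    show "\<bar>g a\<bar> \<le> M" by (rule HML(1))
    have "\<bar>g a - g a'\<bar> \<le> L * \<bar>a - a'\<bar>" by (rule HML(2))
    also have "\<dots> \<le> L * (\<bar>a - a'\<bar> + \<bar>b - b'\<bar>)" using L by (intro mult_left_mono) auto
    finally show "\<bar>g a - g a'\<bar> \<le> L * (\<bar>a - a'\<bar> + \<bar>b - b'\<bar>)" .
  qed
qed

lemma BL2_snd:
  assumes "\<exists>M L. \<forall>x y. \<bar>g x\<bar> \<le> M \<and> \<bar>g x - g y\<bar> \<le> L * \<bar>x - y\<bar>"
  shows "BL2 (\<lambda>a b. g b)"
proof -
  obtain M L where HML: "\<And>x y. \<bar>g x\<bar> \<le> M" "\<And>x y. \<bar>g x - g y\<bar> \<le> L * \<bar>x - y\<bar>" using assms by blast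
  have L: "L \<ge> 0" using HML(2)[of 1 0] by simp
  show ?thesis unfolding BL2_def
  proof (rule exI[of _ M], rule exI[of _ L], intro allI conjI)
    fix a b a' b' :: real
    show "\<bar>g b\<bar> \<le> M" by (rule HML(1))
    have "\<bar>g b - g b'\<bar> \<le> L * \<bar>b - b'\<bar>" by (rule HML(2))
    also have "\<dots> \<le> L * (\<bar>a - a'\<bar> + \<bar>b - b'\<bar>)" using L by (intro mult_left_mono) auto
    finally show "\<bar>g b - g b'\<bar> \<le> L * (\<bar>a - a'\<bar> + \<bar>b - b'\<bar>)" .
  qed
qed

lemma BL2_add:
  assumes "BL2 f" "BL2 g" shows "BL2 (\<lambda>a b. f a b + g a b)"
proof -
  obtain M1 L1 where 1: "\<And>a b a' b'. \<bar>f a b\<bar> \<le> M1 \<and> \<bar>f a b - f a' b'\<bar> \<le> L1 * (\<bar>a - a'\<bar> + \<bar>b - b'\<bar>)"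
    using assms(1) unfolding BL2_def by blast
  obtain M2 L2 where 2: "\<And>a b a' b'. \<bar>g a b\<bar> \<le> M2 \<and> \<bar>g a b - g a' b'\<bar> \<le> L2 * (\<bar>a - a'\<bar> + \<bar>b - b'\<bar>)"
    using assms(2) unfolding BL2_def by blast
  show ?thesis unfolding BL2_def
  proof (rule exI[of _ "M1 + M2"], rule exI[of _ "L1 + L2"], intro allI conjI)
    fix a b a' b' :: real
    show "\<bar>f a b + g a b\<bar> \<le> M1 + M2" using 1[of a b a b] 2[of a b a b] by linarith
    have "\<bar>f a b + g a b - (f a' b' + g a' b')\<bar> \<le> \<bar>f a b - f a' b'\<bar> + \<bar>g a b - g a' b'\<bar>" by linarith
    also have "\<dots> \<le> L1 * (\<bar>a - a'\<bar> + \<bar>b - b'\<bar>) + L2 * (\<bar>a - a'\<bar> + \<bar>b - b'\<bar>)"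
      using 1[of a b a' b'] 2[of a b a' b'] by linarith
    finally show "\<bar>f a b + g a b - (f a' b' + g a' b')\<bar> \<le> (L1 + L2) * (\<bar>a - a'\<bar> + \<bar>b - b'\<bar>)"
      by (simp add: algebra_simps)
  qed
qed

lemma BL2_mult:
  assumes "BL2 f" "BL2 g" shows "BL2 (\<lambda>a b. f a b * g a b)"
proof -
  obtain M1 L1 where 1: "\<And>a b a' b'. \<bar>f a b\<bar> \<le> M1 \<and> \<bar>f a b - f a' b'\<bar> \<le> L1 * (\<bar>a - a'\<bar> + \<bar>b - b'\<bar>)"
    using assms(1) unfolding BL2_def by blast
  obtain M2 L2 where 2: "\<And>a b a' b'. \<bar>g a b\<bar> \<le> M2 \<and> \<bar>g a b - g a' b'\<bar> \<le> L2 * (\<bar>a - a'\<bar> + \<bar>b - b'\<bar>)"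
    using assms(2) unfolding BL2_def by blast
  have M1: "M1 \<ge> 0" using 1[of 0 0 0 0] by linarith
  have M2: "M2 \<ge> 0" using 2[of 0 0 0 0] by linarith
  show ?thesis unfolding BL2_def
  proof (rule exI[of _ "M1 * M2"], rule exI[of _ "M1 * L2 + M2 * L1"], intro allI conjI)
    fix a b a' b' :: real
    define D where "D = \<bar>a - a'\<bar> + \<bar>b - b'\<bar>"
    show "\<bar>f a b * g a b\<bar> \<le> M1 * M2"
      unfolding abs_mult using 1[of a b a b] 2[of a b a b] by (intro mult_mono) auto
    have "f a b * g a b - f a' b' * g a' b' = f a b * (g a b - g a' b') + g a' b' * (f a b - f a' b')"
      by (simp add: algebra_simps)
    then have "\<bar>f a b * g a b - f a' b' * g a' b'\<bar> \<le> \<bar>f a b\<bar> * \<bar>g a b - g a' b'\<bar> + \<bar>g a' b'\<bar> * \<bar>f a b - f a' b'\<bar>"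
      by (metis abs_mult abs_triangle_ineq)
    also have "\<dots> \<le> M1 * (L2 * D) + M2 * (L1 * D)"
      using 1[of a b a' b'] 2[of a b a' b'] 1[of a' b' a' b'] 2[of a' b' a' b'] M1 M2
      by (intro add_mono mult_mono) (auto simp: D_def)
    finally show "\<bar>f a b * g a b - f a' b' * g a' b'\<bar> \<le> (M1 * L2 + M2 * L1) * (\<bar>a - a'\<bar> + \<bar>b - b'\<bar>)"
      by (simp add: D_def algebra_simps)
  qed
qed

lemma BL2_scale: "BL2 f \<Longrightarrow> BL2 (\<lambda>a b. c * f a b)"
  using BL2_mult[OF BL2_const] by blast

lemma nonincr_MVT:
  fixes E :: "real \<Rightarrow> real"
  assumes t: "t \<ge> 0" and c: "continuous_on {0..t} E"
    and d: "\<And>s. 0 < s \<Longrightarrow> s < t \<Longrightarrow> \<exists>D. (E has_real_derivative D) (at s) \<and> D \<le> 0"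
  shows "E t \<le> E 0"
proof (cases "t = 0")
  case True then show ?thesis by simp
next
  case False
  then have t0: "0 < t" using t by simp
  have "\<forall>x. 0 < x \<and> x < t \<longrightarrow> E differentiable (at x)"
    using d by (auto simp: real_differentiable_def)
  from MVT[OF t0 c] this obtain L z where z: "0 < z" "z < t" "(E has_real_derivative L) (at z)"
    "E t - E 0 = (t - 0) * L" by auto
  obtain D where D: "(E has_real_derivative D) (at z)" "D \<le> 0" using d[OF z(1,2)] by auto
  have "L = D" using DERIV_unique[OF z(3) D(1)] .
  then have "(t - 0) * L \<le> 0" using D(2) t0 by (simp add: mult_nonneg_nonpos)
  then show ?thesis using z(4) by simp
qed

lemma vd_fst:
  assumes "(u has_vector_derivative (v1, v2)) F"
  shows "((\<lambda>t. fst (u t)) has_real_derivative v1) F"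
proof -
  have "((\<lambda>t. fst (u t)) has_derivative (\<lambda>x. fst (x *\<^sub>R (v1, v2)))) F"
    using has_derivative_fst[of u "\<lambda>x. x *\<^sub>R (v1, v2)" F] assms by (simp add: has_vector_derivative_def)
  moreover have "(\<lambda>x. x * v1) = (*) v1" by (rule ext) (simp add: mult.commute)
  ultimately show ?thesis by (simp add: has_field_derivative_def)
qed

lemma vd_snd:
  assumes "(u has_vector_derivative (v1, v2)) F"
  shows "((\<lambda>t. snd (u t)) has_real_derivative v2) F"
proof -
  have "((\<lambda>t. snd (u t)) has_derivative (\<lambda>x. snd (x *\<^sub>R (v1, v2)))) F"
    using has_derivative_snd[of u "\<lambda>x. x *\<^sub>R (v1, v2)" F] assms by (simp add: has_vector_derivative_def)
  moreover have "(\<lambda>x. x * v2) = (*) v2" by (rule ext) (simp add: mult.commute)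
  ultimately show ?thesis by (simp add: has_field_derivative_def)
qed

lemma vd_pair:
  assumes "(f has_real_derivative v1) (at x within S)" "(g has_real_derivative v2) (at x within S)"
  shows "((\<lambda>t. (f t, g t)) has_vector_derivative (v1, v2)) (at x within S)"
  using assms by (intro has_vector_derivative_Pair) (simp_all add: has_real_derivative_iff_has_vector_derivative)

lemma within_to_at:
  fixes f :: "real \<Rightarrow> real"
  assumes "t > 0" "(f has_real_derivative D) (at t within {0..})"
  shows "(f has_real_derivative D) (at t)"
proof -
  have "(f has_real_derivative D) (at t within {0<..})"
    by (rule has_field_derivative_subset[OF assms(2)]) auto
  then show ?thesis using at_within_open[of t "{0<..}"] assms(1) by simp
qed

locale main = setting +
  fixes eps d0 :: real
  assumes eps: "eps \<ge> 0"
    and hyp1: "hm - eps * \<bar>d0\<bar> > 0"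
    and hyp2: "eps * \<bar>d0\<bar> < tau0 l tb h (eps * \<bar>d0\<bar>) * (2 * r0 / l)"
begin

abbreviation T where "T \<equiv> tau0 l tb h"
abbreviation T' where "T' \<equiv> tau0' l tb h"

definition w1 :: "real \<Rightarrow> real" where "w1 r = inverse (T r) * inverse (T r)"
definition w2 :: "real \<Rightarrow> real" where "w2 r = T' r * inverse (T r)"
definition F :: "real \<Rightarrow> real \<Rightarrow> real" where
  "F a b = - w1 (eps * a) * (l * b + a) - eps * w2 (eps * a) * b^2 - eps * w1 (eps * a) * gamma l (eps * b) * b^2"

definition T0 where "T0 = T (eps * \<bar>d0\<bar>)"
definition B0 where "B0 = \<bar>d0\<bar> / T0"
definition A where "A = \<bar>d0\<bar> + (hm - eps * \<bar>d0\<bar>) / (2 * (eps + 1))"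
definition B where "B = B0 + (2 * r0 - l * eps * B0) / (2 * (l * eps + 1))"

lemma d0_Ua: "eps * \<bar>d0\<bar> \<in> Ua"
proof -
  have "eps * \<bar>d0\<bar> \<ge> 0" using eps by simp
  then show ?thesis using hm_pos by (simp add: Ua_def)
qed

lemma T0_pos: "T0 > 0" unfolding T0_def by (rule tau0_pos[OF d0_Ua])

lemma B0_nonneg: "B0 \<ge> 0" using T0_pos by (simp add: B0_def)

lemma lB0: "l * eps * B0 < 2 * r0"
proof -
  have "eps * \<bar>d0\<bar> < T0 * (2 * r0 / l)" using hyp2 by (simp add: T0_def)
  then have "eps * \<bar>d0\<bar> / T0 < 2 * r0 / l" using T0_pos by (simp add: field_simps)
  then have "l * (eps * \<bar>d0\<bar> / T0) < 2 * r0" using l_pos by (simp add: field_simps)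
  then show ?thesis by (simp add: B0_def)
qed

lemma A_gt: "\<bar>d0\<bar> < A"
  using hyp1 eps by (simp add: A_def)

lemma A_pos: "A > 0" using A_gt by linarith

lemma epsA: "eps * A < hm"
proof -
  define q where "q = hm - eps * \<bar>d0\<bar>"
  have q: "q > 0" using hyp1 by (simp add: q_def)
  have "eps * (q / (2 * (eps + 1))) < q"
  proof -
    have "eps * (q / (2 * (eps + 1))) = q * (eps / (2 * (eps + 1)))" by simp
    also have "\<dots> < q * 1" using q eps by (intro mult_strict_left_mono) auto
    finally show ?thesis by simp
  qed
  then show ?thesis by (simp add: A_def q_def algebra_simps)
qed

lemma B_gt: "B0 < B"
proof -
  have "l * eps \<ge> 0" using l_pos eps by simp
  then have "(2 * r0 - l * eps * B0) / (2 * (l * eps + 1)) > 0" using lB0 by (intro divide_pos_pos) auto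
  then show ?thesis by (simp add: B_def)
qed

lemma B_pos: "B > 0" using B_gt B0_nonneg by linarith

lemma lepsB: "l * eps * B < 2 * r0"
proof -
  define q where "q = 2 * r0 - l * eps * B0"
  have q: "q > 0" using lB0 by (simp add: q_def)
  have le: "l * eps \<ge> 0" "eps * l \<ge> 0" using l_pos eps by simp_all
  have "l * eps * (q / (2 * (l * eps + 1))) < q"
  proof -
    have "l * eps * (q / (2 * (l * eps + 1))) = q * (l * eps / (2 * (l * eps + 1)))" by simp
    also have "\<dots> < q * 1" using q le by (intro mult_strict_left_mono) auto
    finally show ?thesis by simp
  qed
  then show ?thesis by (simp add: B_def q_def algebra_simps)
qed

lemma box_Ua: "\<bar>x\<bar> \<le> A \<Longrightarrow> eps * x \<in> Ua"
proof -
  assume x: "\<bar>x\<bar> \<le> A"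
  have "- (eps * x) \<le> eps * A" using x eps by (metis abs_le_iff mult_left_mono mult_minus_right)
  then show ?thesis using epsA by (auto simp: Ua_def)
qed

lemma box_Ub: "\<bar>y\<bar> \<le> B \<Longrightarrow> eps * y \<in> Ub l"
proof -
  assume y: "\<bar>y\<bar> \<le> B"
  have "eps * y \<le> eps * B" using y eps by (intro mult_left_mono) auto
  then have "l * (eps * y) \<le> l * eps * B" using l_pos by (simp add: mult_left_mono mult.assoc)
  then show ?thesis using lepsB by (simp add: Ub_def)
qed

lemma smooth_w1: "smooth Ua w1"
  unfolding w1_def
  by (intro smooth_mult smooth_inv_comp smooth_tau0 perf_Ua) (auto dest: tau0_pos)

lemma smooth_w2: "smooth Ua w2"
  unfolding w2_def
  by (intro smooth_mult smooth_inv_comp smooth_tau0 smooth_tau0' perf_Ua) (auto dest: tau0_pos)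

lemma F_ode:
  assumes "eps * a \<in> Ua"
  shows "(T (eps * a))^2 * F a b + l * b + a + eps * (T (eps * a) * T' (eps * a) + gamma l (eps * b)) * b^2 = 0"
proof -
  have "T (eps * a) \<noteq> 0" using tau0_pos[OF assms] by simp
  then show ?thesis by (simp add: F_def w1_def w2_def field_simps power2_eq_square)
qed

lemma F_ode_inv:
  assumes "eps * a \<in> Ua"
    and "(T (eps * a))^2 * c + l * b + a + eps * (T (eps * a) * T' (eps * a) + gamma l (eps * b)) * b^2 = 0"
  shows "c = F a b"
proof -
  have nz: "(T (eps * a))^2 \<noteq> 0" using tau0_pos[OF assms(1)] by simp
  have "(T (eps * a))^2 * c = (T (eps * a))^2 * F a b" using assms(2) F_ode[OF assms(1), of b] by linarith
  then show ?thesis using nz by simp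
qed

definition Fm :: "real \<Rightarrow> real \<Rightarrow> real" where "Fm a b = F (clmp A a) (clmp B b)"
definition Phi :: "real \<times> real \<Rightarrow> real \<times> real" where "Phi p = (clmp B (snd p), Fm (fst p) (snd p))"

lemma clmp_BL: "C \<ge> 0 \<Longrightarrow> \<exists>M L. \<forall>x y. \<bar>clmp C x\<bar> \<le> M \<and> \<bar>clmp C x - clmp C y\<bar> \<le> L * \<bar>x - y\<bar>"
  by (rule exI[of _ C], rule exI[of _ 1]) (auto intro: clmp_range clmp_lip)

lemma eps_clamp:
  assumes "C \<ge> 0"
  shows "\<And>x. eps * clmp C x \<in> {- (eps * C)..eps * C}"
    and "\<And>x y. \<bar>eps * clmp C x - eps * clmp C y\<bar> \<le> eps * \<bar>x - y\<bar>"
proof -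
  fix x
  have "\<bar>clmp C x\<bar> \<le> C" by (rule clmp_range[OF assms])
  then have "\<bar>eps * clmp C x\<bar> \<le> eps * C" using eps by (simp add: abs_mult mult_left_mono)
  then show "eps * clmp C x \<in> {- (eps * C)..eps * C}" by (simp add: abs_le_iff)
next
  fix x y
  have "\<bar>eps * clmp C x - eps * clmp C y\<bar> = eps * \<bar>clmp C x - clmp C y\<bar>"
    using eps by (simp add: abs_mult right_diff_distrib[symmetric])
  also have "\<dots> \<le> eps * \<bar>x - y\<bar>" using eps clmp_lip by (intro mult_left_mono) auto
  finally show "\<bar>eps * clmp C x - eps * clmp C y\<bar> \<le> eps * \<bar>x - y\<bar>" .
qed

lemma Ua_box: "{- (eps * A)..eps * A} \<subseteq> Ua"
  using epsA by (auto simp: Ua_def)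

lemma Ub_box: "{- (eps * B)..eps * B} \<subseteq> Ub l"
proof
  fix z assume "z \<in> {- (eps * B)..eps * B}"
  then have "l * z \<le> l * (eps * B)" using l_pos by (intro mult_left_mono) auto
  then show "z \<in> Ub l" using lepsB by (simp add: Ub_def mult.assoc)
qed

lemma BL2_Fm: "BL2 Fm"
proof -
  define ca where "ca x = clmp A x" for x
  define cb where "cb x = clmp B x" for x
  define g1 where "g1 x = w1 (eps * clmp A x)" for x
  define g2 where "g2 x = w2 (eps * clmp A x)" for x
  define k where "k x = gamma l (eps * clmp B x)" for x
  have Ag: "A \<ge> 0" "B \<ge> 0" using A_pos B_pos by auto
  have bg1: "\<exists>M L. \<forall>x y. \<bar>g1 x\<bar> \<le> M \<and> \<bar>g1 x - g1 y\<bar> \<le> L * \<bar>x - y\<bar>"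
    unfolding g1_def by (rule BL_comp[OF smooth_w1 open_Ua Ua_box eps_clamp(1)[OF Ag(1)] eps eps_clamp(2)[OF Ag(1)]])
  have bg2: "\<exists>M L. \<forall>x y. \<bar>g2 x\<bar> \<le> M \<and> \<bar>g2 x - g2 y\<bar> \<le> L * \<bar>x - y\<bar>"
    unfolding g2_def by (rule BL_comp[OF smooth_w2 open_Ua Ua_box eps_clamp(1)[OF Ag(1)] eps eps_clamp(2)[OF Ag(1)]])
  have bk: "\<exists>M L. \<forall>x y. \<bar>k x\<bar> \<le> M \<and> \<bar>k x - k y\<bar> \<le> L * \<bar>x - y\<bar>"
    unfolding k_def by (rule BL_comp[OF smooth_gamma[OF l_pos] open_Ub Ub_box eps_clamp(1)[OF Ag(2)] eps eps_clamp(2)[OF Ag(2)]])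
  have bca: "\<exists>M L. \<forall>x y. \<bar>ca x\<bar> \<le> M \<and> \<bar>ca x - ca y\<bar> \<le> L * \<bar>x - y\<bar>"
    unfolding ca_def by (rule clmp_BL[OF Ag(1)])
  have bcb: "\<exists>M L. \<forall>x y. \<bar>cb x\<bar> \<le> M \<and> \<bar>cb x - cb y\<bar> \<le> L * \<bar>x - y\<bar>"
    unfolding cb_def by (rule clmp_BL[OF Ag(2)])
  have G1: "BL2 (\<lambda>a b. g1 a)" by (rule BL2_fst[OF bg1])
  have G2: "BL2 (\<lambda>a b. g2 a)" by (rule BL2_fst[OF bg2])
  have K: "BL2 (\<lambda>a b. k b)" by (rule BL2_snd[OF bk])
  have CA: "BL2 (\<lambda>a b. ca a)" by (rule BL2_fst[OF bca])
  have CB: "BL2 (\<lambda>a b. cb b)" by (rule BL2_snd[OF bcb])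
  have "BL2 (\<lambda>a b. (-1) * (g1 a * (l * cb b + ca a)) + ((- eps) * (g2 a * (cb b * cb b))
                    + (- eps) * (g1 a * (k b * (cb b * cb b)))))"
    by (intro BL2_add BL2_mult BL2_scale G1 G2 K CA CB)
  moreover have "(\<lambda>a b. (-1) * (g1 a * (l * cb b + ca a)) + ((- eps) * (g2 a * (cb b * cb b))
                    + (- eps) * (g1 a * (k b * (cb b * cb b))))) = Fm"
    by (intro ext) (simp add: Fm_def F_def g1_def g2_def k_def ca_def cb_def power2_eq_square algebra_simps)
  ultimately show ?thesis by simp
qed

lemma Phi_lip: "\<exists>L>0. \<forall>p q. norm (Phi p - Phi q) \<le> L * norm (p - q)"
proof -
  obtain M L where ML0: "\<And>a b a' b'. \<bar>Fm a b\<bar> \<le> M \<and> \<bar>Fm a b - Fm a' b'\<bar> \<le> L * (\<bar>a - a'\<bar> + \<bar>b - b'\<bar>)"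
    using BL2_Fm unfolding BL2_def by blast
  have L0: "L \<ge> 0" using ML0[of 1 0 0 0] by auto
  show ?thesis
  proof (rule exI[of _ "2 * (1 + L)"], intro conjI allI)
    show "2 * (1 + L) > 0" using L0 by simp
    fix p q :: "real \<times> real"
    obtain a b where p: "p = (a, b)" by (cases p)
    obtain a' b' where q: "q = (a', b')" by (cases q)
    have na: "\<bar>a - a'\<bar> \<le> norm (p - q)" using norm_fst_le[of "a - a'" "b - b'"] by (simp add: p q)
    have nb: "\<bar>b - b'\<bar> \<le> norm (p - q)" using norm_snd_le[of "b - b'" "a - a'"] by (simp add: p q)
    have "norm (Phi p - Phi q) \<le> \<bar>clmp B b - clmp B b'\<bar> + \<bar>Fm a b - Fm a' b'\<bar>"
      using norm_Pair_le[of "clmp B b - clmp B b'" "Fm a b - Fm a' b'"] by (simp add: Phi_def p q)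
    also have "\<dots> \<le> \<bar>b - b'\<bar> + L * (\<bar>a - a'\<bar> + \<bar>b - b'\<bar>)"
      using clmp_lip[of B b b'] ML0[of a b a' b'] by linarith
    also have "\<dots> \<le> norm (p - q) + L * (norm (p - q) + norm (p - q))"
      using na nb L0 by (intro add_mono mult_left_mono) auto
    also have "\<dots> \<le> 2 * (1 + L) * norm (p - q)" by (simp add: algebra_simps)
    finally show "norm (Phi p - Phi q) \<le> 2 * (1 + L) * norm (p - q)" .
  qed
qed

lemma Phi_bound: "\<exists>M. \<forall>p. norm (Phi p) \<le> M"
proof -
  obtain M L where ML0: "\<And>a b a' b'. \<bar>Fm a b\<bar> \<le> M \<and> \<bar>Fm a b - Fm a' b'\<bar> \<le> L * (\<bar>a - a'\<bar> + \<bar>b - b'\<bar>)"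
    using BL2_Fm unfolding BL2_def by blast
  show ?thesis
  proof (rule exI[of _ "B + M"], intro allI)
    fix p :: "real \<times> real"
    have "norm (Phi p) \<le> \<bar>clmp B (snd p)\<bar> + \<bar>Fm (fst p) (snd p)\<bar>"
      using norm_Pair_le[of "clmp B (snd p)" "Fm (fst p) (snd p)"] by (simp add: Phi_def)
    also have "\<dots> \<le> B + M" using clmp_range[of B "snd p"] B_pos ML0[of "fst p" "snd p" 0 0] by linarith
    finally show "norm (Phi p) \<le> B + M" .
  qed
qed

lemma Phi_ode: "\<exists>u. odesol Phi (d0, 0) u \<and> (\<forall>v. odesol Phi (d0, 0) v \<longrightarrow> (\<forall>t\<ge>0. v t = u t))"
proof -
  obtain L where L: "L > 0" "\<forall>p q. norm (Phi p - Phi q) \<le> L * norm (p - q)" using Phi_lip by blast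
  obtain M where M: "\<forall>p. norm (Phi p) \<le> M" using Phi_bound by blast
  show ?thesis by (rule ode_global[OF L M])
qed

lemma energy_deriv:
  fixes a b \<kappa> :: "real \<Rightarrow> real"
  assumes da: "(a has_real_derivative b s) (at s)"
    and db: "(b has_real_derivative F (a s) (b s)) (at s)"
    and dk: "(\<kappa> has_real_derivative 1) (at (a s))" and ka: "\<kappa> (a s) = a s"
    and ua: "eps * a s \<in> Ua" and ub: "l * (eps * b s) < 2 * r0"
  shows "\<exists>D. ((\<lambda>s. (T (eps * \<kappa> (a s)))^2 * (b s)^2 / 2 + (a s)^2 / 2) has_real_derivative D) (at s) \<and> D \<le> 0"
proof -
  define Tv where "Tv = T (eps * a s)"
  define Tp where "Tp = T' (eps * a s)"
  define bv where "bv = b s"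
  define av where "av = a s"
  define Fv where "Fv = F (a s) (b s)"
  have inner: "((\<lambda>s. eps * \<kappa> (a s)) has_real_derivative eps * (1 * b s)) (at s)"
    by (rule DERIV_cmult[OF DERIV_chain2[OF dk da]])
  have outer: "(T has_real_derivative Tp) (at (eps * \<kappa> (a s)))"
    using tau0_deriv[OF ua] ka by (simp add: Tp_def)
  have dT: "((\<lambda>s. T (eps * \<kappa> (a s))) has_real_derivative Tp * (eps * (1 * b s))) (at s)"
    by (rule DERIV_chain2[OF outer inner])
  have dE: "((\<lambda>s. (T (eps * \<kappa> (a s)))^2 * (b s)^2 / 2 + (a s)^2 / 2) has_real_derivative
      (Tv * Tp * eps * bv^3 + bv * (Tv^2 * Fv) + av * bv)) (at s)"
    using dT da db ka
    by (auto intro!: derivative_eq_intros simp: Tv_def bv_def av_def Fv_def power2_eq_square power3_eq_cube algebra_simps)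
  have fo: "Tv^2 * Fv = - (l * bv + av) - eps * (Tv * Tp + gamma l (eps * bv)) * bv^2"
    using F_ode[OF ua, of "b s"] by (simp add: Tv_def Tp_def Fv_def bv_def av_def algebra_simps)
  have "Tv * Tp * eps * bv^3 + bv * (Tv^2 * Fv) + av * bv = -((bv^2) * (l + (eps * bv) * gamma l (eps * bv)))"
    unfolding fo by (simp add: algebra_simps power2_eq_square power3_eq_cube)
  also have "\<dots> \<le> 0"
    using gamma_pos[OF l_pos, of "eps * bv"] ub by (simp add: bv_def mult_nonneg_nonneg)
  finally show ?thesis using dE by blast
qed

lemma energy_bound:
  fixes a b \<kappa> :: "real \<Rightarrow> real"
  assumes t: "t \<ge> 0" and ca: "continuous_on {0..t} a" and cb: "continuous_on {0..t} b"
    and cT: "continuous_on {0..t} (\<lambda>s. T (eps * \<kappa> (a s)))"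
    and a0: "a 0 = d0" and b0: "b 0 = 0"
    and d: "\<And>s. 0 < s \<Longrightarrow> s < t \<Longrightarrow> (a has_real_derivative b s) (at s) \<and>
              (b has_real_derivative F (a s) (b s)) (at s) \<and> (\<kappa> has_real_derivative 1) (at (a s)) \<and>
              \<kappa> (a s) = a s \<and> eps * a s \<in> Ua \<and> l * (eps * b s) < 2 * r0"
    and kid: "\<And>x. \<bar>x\<bar> \<le> \<bar>d0\<bar> \<Longrightarrow> \<kappa> x = x"
  shows "\<bar>a t\<bar> \<le> \<bar>d0\<bar> \<and> \<bar>b t\<bar> \<le> B0"
proof -
  define E where "E s = (T (eps * \<kappa> (a s)))^2 * (b s)^2 / 2 + (a s)^2 / 2" for s
  have cE: "continuous_on {0..t} E"
    unfolding E_def by (intro continuous_intros cT ca cb) auto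
  have "E t \<le> E 0"
  proof (rule nonincr_MVT[OF t cE])
    fix s assume "0 < s" "s < t"
    from d[OF this] show "\<exists>D. (E has_real_derivative D) (at s) \<and> D \<le> 0"
      unfolding E_def[abs_def] using energy_deriv by blast
  qed
  also have "E 0 = d0^2 / 2" by (simp add: E_def a0 b0)
  finally have Et: "E t \<le> d0^2 / 2" .
  have nn: "(T (eps * \<kappa> (a t)))^2 * (b t)^2 \<ge> 0" by simp
  have "(T (eps * \<kappa> (a t)))^2 * (b t)^2 + (a t)^2 \<le> d0^2" using Et by (simp add: E_def)
  then have "(a t)^2 \<le> d0^2" using nn by linarith
  then have at: "\<bar>a t\<bar> \<le> \<bar>d0\<bar>" by (simp add: abs_le_square_iff)
  have ka: "\<kappa> (a t) = a t" by (rule kid[OF at])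
  have ua: "eps * a t \<in> Ua" by (rule box_Ua) (use at A_gt in linarith)
  have "eps * a t \<le> eps * \<bar>d0\<bar>" using at eps by (intro mult_left_mono) auto
  then have Tge: "T0 \<le> T (eps * a t)" unfolding T0_def by (rule tau0_antimono[OF ua d0_Ua])
  have "(T (eps * a t))^2 * (b t)^2 + (a t)^2 \<le> d0^2" using Et ka by (simp add: E_def)
  then have "(T (eps * a t))^2 * (b t)^2 \<le> d0^2" by (smt (verit) zero_le_power2)
  moreover have "T0^2 * (b t)^2 \<le> (T (eps * a t))^2 * (b t)^2"
    using Tge T0_pos by (intro mult_right_mono power_mono) auto
  ultimately have "(T0 * b t)^2 \<le> d0^2" by (simp add: power_mult_distrib)
  then have "\<bar>T0 * b t\<bar> \<le> \<bar>d0\<bar>" by (simp add: abs_le_square_iff)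
  then have "T0 * \<bar>b t\<bar> \<le> \<bar>d0\<bar>" using T0_pos by (simp add: abs_mult)
  then have "\<bar>b t\<bar> \<le> B0" using T0_pos by (simp add: B0_def field_simps)
  with at show ?thesis by simp
qed

lemma sol_parts:
  assumes u: "odesol Phi (d0, 0) u"
  shows "continuous_on {0..} (\<lambda>t. fst (u t))" "continuous_on {0..} (\<lambda>t. snd (u t))"
    "fst (u 0) = d0" "snd (u 0) = 0"
    "\<And>t. t \<ge> 0 \<Longrightarrow> ((\<lambda>t. fst (u t)) has_real_derivative clmp B (snd (u t))) (at t within {0..})"
    "\<And>t. t \<ge> 0 \<Longrightarrow> ((\<lambda>t. snd (u t)) has_real_derivative Fm (fst (u t)) (snd (u t))) (at t within {0..})"
proof -
  have cu: "continuous_on {0..} u" using u by (simp add: odesol_def)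
  show "continuous_on {0..} (\<lambda>t. fst (u t))" by (intro continuous_intros cu)
  show "continuous_on {0..} (\<lambda>t. snd (u t))" by (intro continuous_intros cu)
  show "fst (u 0) = d0" "snd (u 0) = 0" using u by (auto simp: odesol_def)
  fix t :: real assume "t \<ge> 0"
  then have "(u has_vector_derivative (clmp B (snd (u t)), Fm (fst (u t)) (snd (u t)))) (at t within {0..})"
    using u by (simp add: odesol_def Phi_def)
  then show "((\<lambda>t. fst (u t)) has_real_derivative clmp B (snd (u t))) (at t within {0..})"
    "((\<lambda>t. snd (u t)) has_real_derivative Fm (fst (u t)) (snd (u t))) (at t within {0..})"
    by (rule vd_fst, rule vd_snd)
qed

lemma T_cont: "continuous_on Ua T"
  by (rule smooth_cont[OF smooth_tau0])

lemma local_energy: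
  assumes u: "odesol Phi (d0, 0) u" and t: "t \<ge> 0"
    and box: "\<And>s. 0 \<le> s \<Longrightarrow> s < t \<Longrightarrow> \<bar>fst (u s)\<bar> < A \<and> \<bar>snd (u s)\<bar> < B"
  shows "\<bar>fst (u t)\<bar> \<le> \<bar>d0\<bar> \<and> \<bar>snd (u t)\<bar> \<le> B0"
proof -
  define a where "a s = fst (u s)" for s
  define b where "b s = snd (u s)" for s
  note P = sol_parts[OF u, folded a_def b_def]
  have ca: "continuous_on {0..t} a" using P(1) by (rule continuous_on_subset) auto
  have cb: "continuous_on {0..t} b" using P(2) by (rule continuous_on_subset) auto
  have cT: "continuous_on {0..t} (\<lambda>s. T (eps * clmp A (a s)))"
  proof (rule continuous_on_compose2[OF T_cont])
    show "continuous_on {0..t} (\<lambda>s. eps * clmp A (a s))"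
      unfolding clmp_def by (intro continuous_intros ca)
    show "(\<lambda>s. eps * clmp A (a s)) ` {0..t} \<subseteq> Ua"
      using box_Ua clmp_range A_pos by fastforce
  qed
  have "\<bar>a t\<bar> \<le> \<bar>d0\<bar> \<and> \<bar>b t\<bar> \<le> B0"
  proof (rule energy_bound[OF t ca cb cT P(3) P(4)])
    fix s :: real assume s: "0 < s" "s < t"
    have bx: "\<bar>a s\<bar> < A" "\<bar>b s\<bar> < B" using box[of s] s by (auto simp: a_def b_def)
    have "(a has_real_derivative clmp B (b s)) (at s)" using within_to_at[OF s(1) P(5)] s by simp
    moreover have "clmp B (b s) = b s" using bx by (intro clmp_id) auto
    moreover have "(b has_real_derivative Fm (a s) (b s)) (at s)" using within_to_at[OF s(1) P(6)] s by simp
    moreover have "Fm (a s) (b s) = F (a s) (b s)" using bx clmp_id by (simp add: Fm_def less_imp_le)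
    moreover have "(clmp A has_real_derivative 1) (at (a s))" by (rule clmp_deriv[OF bx(1)])
    moreover have "clmp A (a s) = a s" using bx by (intro clmp_id) auto
    moreover have "eps * a s \<in> Ua" using bx by (intro box_Ua) auto
    moreover have "eps * b s \<in> Ub l" using bx by (intro box_Ub) auto
    ultimately show "(a has_real_derivative b s) (at s) \<and>
              (b has_real_derivative F (a s) (b s)) (at s) \<and> (clmp A has_real_derivative 1) (at (a s)) \<and>
              clmp A (a s) = a s \<and> eps * a s \<in> Ua \<and> l * (eps * b s) < 2 * r0"
      by (simp add: Ub_def)
  next
    fix x :: real assume "\<bar>x\<bar> \<le> \<bar>d0\<bar>"
    then show "clmp A x = x" using A_gt by (intro clmp_id) auto
  qed
  then show ?thesis by (simp add: a_def b_def)
qed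

lemma sol_box:
  assumes u: "odesol Phi (d0, 0) u" and t: "t \<ge> 0"
  shows "\<bar>fst (u t)\<bar> < A \<and> \<bar>snd (u t)\<bar> < B"
proof (rule ccontr)
  assume nt: "\<not> (\<bar>fst (u t)\<bar> < A \<and> \<bar>snd (u t)\<bar> < B)"
  define g where "g s = max (\<bar>fst (u s)\<bar> - A) (\<bar>snd (u s)\<bar> - B)" for s
  define X where "X = {0..} \<inter> g -` {0..}"
  note P = sol_parts[OF u]
  have cg: "continuous_on {0..} g" unfolding g_def by (intro continuous_intros P(1) P(2))
  have cX: "closed X" unfolding X_def by (rule continuous_closed_preimage[OF cg]) auto
  have tX: "t \<in> X" using nt t by (auto simp: X_def g_def)
  have bX: "bdd_below X" unfolding X_def by (rule bdd_belowI[of _ 0]) auto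
  define s where "s = Inf X"
  have sX: "s \<in> X" unfolding s_def by (rule closed_contains_Inf[OF _ bX cX]) (use tX in auto)
  have s0: "s \<ge> 0" using sX by (auto simp: X_def)
  have below: "\<bar>fst (u r)\<bar> < A \<and> \<bar>snd (u r)\<bar> < B" if "0 \<le> r" "r < s" for r
  proof (rule ccontr)
    assume "\<not> (\<bar>fst (u r)\<bar> < A \<and> \<bar>snd (u r)\<bar> < B)"
    then have "r \<in> X" using that by (auto simp: X_def g_def)
    then have "s \<le> r" unfolding s_def by (rule cInf_lower[OF _ bX])
    with that show False by simp
  qed
  have "\<bar>fst (u s)\<bar> \<le> \<bar>d0\<bar> \<and> \<bar>snd (u s)\<bar> \<le> B0" by (rule local_energy[OF u s0 below])
  then have "\<bar>fst (u s)\<bar> < A \<and> \<bar>snd (u s)\<bar> < B" using A_gt B_gt by linarith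
  then have "g s < 0" by (simp add: g_def)
  with sX show False by (simp add: X_def)
qed

lemma sol_bounds:
  assumes u: "odesol Phi (d0, 0) u" and t: "t \<ge> 0"
  shows "\<bar>fst (u t)\<bar> \<le> \<bar>d0\<bar> \<and> \<bar>snd (u t)\<bar> \<le> B0"
  by (rule local_energy[OF u t sol_box[OF u]])

lemma path_smooth:
  fixes a b :: "real \<Rightarrow> real"
  assumes da: "\<And>t. t \<ge> 0 \<Longrightarrow> (a has_real_derivative b t) (at t within {0..})"
    and db: "\<And>t. t \<ge> 0 \<Longrightarrow> (b has_real_derivative F (a t) (b t)) (at t within {0..})"
    and ua: "\<And>t. t \<ge> 0 \<Longrightarrow> eps * a t \<in> Ua"
    and ub: "\<And>t. t \<ge> 0 \<Longrightarrow> eps * b t \<in> Ub l"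
  shows "Cs k {0..} a \<and> Cs k {0..} b"
proof (induction k)
  case 0
  have "continuous_on {0..} a" by (rule DERIV_continuous_on[of _ _ b]) (use da in auto)
  moreover have "continuous_on {0..} b" by (rule DERIV_continuous_on[of _ _ "\<lambda>t. F (a t) (b t)"]) (use db in auto)
  ultimately show ?case by simp
next
  case (Suc k)
  have p: "perf {0::real..}" by (rule perf_Ici)
  have pUb: "perf (Ub l)" by (rule perf_open[OF open_Ub])
  have A: "Cs k {0..} a" and Bk: "Cs k {0..} b" using Suc by auto
  have ea: "Cs k {0..} (\<lambda>t. eps * a t)" by (intro Cs_mult Cs_const p A)
  have eb: "Cs k {0..} (\<lambda>t. eps * b t)" by (intro Cs_mult Cs_const p Bk)
  have W1: "Cs k {0..} (\<lambda>t. w1 (eps * a t))"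
    by (rule Cs_comp[OF _ ea _ p perf_Ua]) (use smooth_w1 ua in \<open>auto simp: smooth_def\<close>)
  have W2: "Cs k {0..} (\<lambda>t. w2 (eps * a t))"
    by (rule Cs_comp[OF _ ea _ p perf_Ua]) (use smooth_w2 ua in \<open>auto simp: smooth_def\<close>)
  have G: "Cs k {0..} (\<lambda>t. gamma l (eps * b t))"
    by (rule Cs_comp[OF _ eb _ p pUb]) (use smooth_gamma[OF l_pos] ub in \<open>auto simp: smooth_def\<close>)
  have "Cs k {0..} (\<lambda>t. (-1) * (w1 (eps * a t) * (l * b t + a t)) + ((- eps) * (w2 (eps * a t) * (b t * b t))
          + (- eps) * (w1 (eps * a t) * (gamma l (eps * b t) * (b t * b t)))))"
    by (intro Cs_add Cs_mult Cs_const p A Bk W1 W2 G)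
  then have CF: "Cs k {0..} (\<lambda>t. F (a t) (b t))"
    by (rule Cs_cong[OF _ p]) (simp add: F_def power2_eq_square algebra_simps)
  have "Cs (Suc k) {0..} b"
    by (rule Cs_SucI[where f'="\<lambda>t. F (a t) (b t)", OF p _ CF]) (use db in auto)
  moreover have "Cs (Suc k) {0..} a"
    by (rule Cs_SucI[where f'=b, OF p _ Bk]) (use da in auto)
  ultimately show ?case by simp
qed

end

lemma Cs_funpow: "Cs (n + k) S f \<Longrightarrow> Cs k S ((dS S ^^ n) f)"
proof (induction n arbitrary: k)
  case 0 then show ?case by simp
next
  case (Suc n)
  have "Cs (n + Suc k) S f" using Suc.prems by simp
  then have "Cs (Suc k) S ((dS S ^^ n) f)" by (rule Suc.IH)
  then show ?case by simp
qed

context main begin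

lemma orig_sol:
  assumes u: "odesol Phi (d0, 0) u"
  shows "is_global_solution l tb h eps d0 (\<lambda>t. fst (u t))"
proof -
  define a where "a t = fst (u t)" for t
  define b where "b t = snd (u t)" for t
  note P = sol_parts[OF u, folded a_def b_def]
  have bx: "\<bar>a t\<bar> < A" "\<bar>b t\<bar> < B" if "t \<ge> 0" for t
    using sol_box[OF u that] by (auto simp: a_def b_def)
  have da: "(a has_real_derivative b t) (at t within {0..})" if "t \<ge> 0" for t
    using P(5)[OF that] clmp_id[of "b t" B] bx[OF that] by simp
  have db: "(b has_real_derivative F (a t) (b t)) (at t within {0..})" if "t \<ge> 0" for t
    using P(6)[OF that] clmp_id[of "b t" B] clmp_id[of "a t" A] bx[OF that] by (simp add: Fm_def)
  have ua: "eps * a t \<in> Ua" if "t \<ge> 0" for t using bx[OF that] by (intro box_Ua) auto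
  have ub: "eps * b t \<in> Ub l" if "t \<ge> 0" for t using bx[OF that] by (intro box_Ub) auto
  have sm: "Cs k {0..} a" for k using path_smooth[OF da db ua ub] by blast
  define D where "D n = (dS {0..} ^^ n) a" for n
  have p: "perf {0::real..}" by (rule perf_Ici)
  have tower: "(D n has_real_derivative D (Suc n) t) (at t within {0..})" if "t \<ge> 0" for n t
  proof -
    have "Cs (Suc 0) {0..} (D n)" unfolding D_def by (rule Cs_funpow) (use sm in simp)
    then show ?thesis using that by (simp add: D_def)
  qed
  have D0: "D 0 = a" by (simp add: D_def)
  have D1: "D 1 t = b t" if "t \<ge> 0" for t
  proof -
    have "D 1 t = dS {0..} a t" by (simp add: D_def)
    also have "\<dots> = b t" by (rule dS_eq[OF p _ da]) (use that in auto)
    finally show ?thesis .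
  qed
  have D2: "D 2 t = F (a t) (b t)" if "t \<ge> 0" for t
  proof -
    have "((D 1) has_real_derivative F (a t) (b t)) (at t within {0..})"
      by (rule has_field_derivative_transform_within[OF db[OF that], of 1]) (use that D1 in auto)
    moreover have "D 2 t = dS {0..} (D 1) t" by (simp add: D_def numeral_2_eq_2)
    ultimately show ?thesis using dS_eq[OF p] that by simp
  qed
  show ?thesis
    unfolding is_global_solution_def
  proof (rule exI[of _ D], intro conjI allI impI ballI)
    show "D 0 = (\<lambda>t. fst (u t))" by (simp add: D0 a_def[abs_def])
    show "deriv_tower_nonneg D" unfolding deriv_tower_nonneg_def using tower by blast
    show "D 0 0 = d0" using P(3) by (simp add: D0)
    show "D 1 0 = 0" using P(4) D1[of 0] by simp
    fix t :: real assume t: "t \<ge> 0"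
    show "l * (eps * D 1 t) < 2 * r0" using ub[OF t] D1[OF t] by (simp add: Ub_def)
    show "(T (eps * D 0 t))\<^sup>2 * D 2 t + l * D 1 t + D 0 t
          + eps * (T (eps * D 0 t) * T' (eps * D 0 t) + gamma l (eps * D 1 t)) * (D 1 t)\<^sup>2 = 0"
      using F_ode[OF ua[OF t], of "b t"] D1[OF t] D2[OF t] by (simp add: D0)
    fix x assume "x \<in> {-l..l}"
    then show "h x + eps * D 0 t > 0" using Ua_pos[OF ua[OF t]] by (simp add: D0)
  qed
qed

lemma other_sol:
  assumes g: "is_global_solution l tb h eps d0 \<delta>'"
  shows "odesol Phi (d0, 0) (\<lambda>t. (\<delta>' t, dS {0..} \<delta>' t))"
proof -
  obtain D where D: "D 0 = \<delta>'" "deriv_tower_nonneg D" "D 0 0 = d0" "D 1 0 = 0"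
    and H: "\<And>t. t \<ge> 0 \<Longrightarrow> (\<forall>x\<in>{-l..l}. h x + eps * D 0 t > 0) \<and> l * (eps * D 1 t) < 2 * r0 \<and>
          (T (eps * D 0 t))\<^sup>2 * D 2 t + l * D 1 t + D 0 t
          + eps * (T (eps * D 0 t) * T' (eps * D 0 t) + gamma l (eps * D 1 t)) * (D 1 t)\<^sup>2 = 0"
    using g unfolding is_global_solution_def by blast
  have p: "perf {0::real..}" by (rule perf_Ici)
  define a where "a = D 0"
  define b where "b = D 1"
  have ua: "eps * a t \<in> Ua" if "t \<ge> 0" for t using H[OF that] Ua_iff by (simp add: a_def)
  have ub: "l * (eps * b t) < 2 * r0" if "t \<ge> 0" for t using H[OF that] by (simp add: b_def)
  have da: "(a has_real_derivative b t) (at t within {0..})" if "t \<ge> 0" for t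
    using D(2) that unfolding deriv_tower_nonneg_def a_def b_def by (metis One_nat_def)
  have D2F: "D 2 t = F (a t) (b t)" if "t \<ge> 0" for t
    by (rule F_ode_inv[OF ua[OF that]]) (use H[OF that] in \<open>simp add: a_def b_def\<close>)
  have db: "(b has_real_derivative F (a t) (b t)) (at t within {0..})" if "t \<ge> 0" for t
  proof -
    have "(D 1 has_real_derivative D 2 t) (at t within {0..})"
      using D(2) that unfolding deriv_tower_nonneg_def by (metis Suc_1)
    then show ?thesis using D2F[OF that] by (simp add: b_def)
  qed
  have ca: "continuous_on {0..} a" by (rule DERIV_continuous_on[of _ _ b]) (use da in auto)
  have cb: "continuous_on {0..} b" by (rule DERIV_continuous_on[of _ _ "\<lambda>t. F (a t) (b t)"]) (use db in auto)
  have bnd: "\<bar>a t\<bar> \<le> \<bar>d0\<bar> \<and> \<bar>b t\<bar> \<le> B0" if t: "t \<ge> 0" for t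
  proof (rule energy_bound[where \<kappa>="\<lambda>x. x" and a=a and b=b and t=t])
    show "t \<ge> 0" by fact
    show "continuous_on {0..t} a" using ca by (rule continuous_on_subset) auto
    show "continuous_on {0..t} b" using cb by (rule continuous_on_subset) auto
    show "continuous_on {0..t} (\<lambda>s. T (eps * a s))"
    proof (rule continuous_on_compose2[OF T_cont])
      show "continuous_on {0..t} (\<lambda>s. eps * a s)"
        by (intro continuous_intros continuous_on_subset[OF ca]) auto
      show "(\<lambda>s. eps * a s) ` {0..t} \<subseteq> Ua" using ua by auto
    qed
    show "a 0 = d0" "b 0 = 0" using D by (auto simp: a_def b_def)
    fix s :: real assume s: "0 < s" "s < t"
    have "(a has_real_derivative b s) (at s)" using within_to_at[OF s(1) da] s by simp
    moreover have "(b has_real_derivative F (a s) (b s)) (at s)" using within_to_at[OF s(1) db] s by simp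
    ultimately show "(a has_real_derivative b s) (at s) \<and> (b has_real_derivative F (a s) (b s)) (at s) \<and>
        ((\<lambda>x. x) has_real_derivative 1) (at (a s)) \<and> a s = a s \<and> eps * a s \<in> Ua \<and> l * (eps * b s) < 2 * r0"
      using ua ub s by auto
  qed simp
  have dSb: "dS {0..} \<delta>' t = b t" if "t \<ge> 0" for t
    by (rule dS_eq[OF p _ da[OF that, unfolded a_def D(1)]]) (use that in auto)
  show ?thesis
    unfolding odesol_def
  proof (intro conjI allI impI)
    have "continuous_on {0..} (\<lambda>t. (a t, b t))" by (intro continuous_intros ca cb)
    then show "continuous_on {0..} (\<lambda>t. (\<delta>' t, dS {0..} \<delta>' t))"
      by (rule continuous_on_cong[THEN iffD1, rotated 2]) (auto simp: dSb a_def D(1))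
    show "(\<delta>' 0, dS {0..} \<delta>' 0) = (d0, 0)" using D dSb[of 0] by (simp add: b_def)
    fix t :: real assume t: "t \<ge> 0"
    have bt: "\<bar>a t\<bar> < A" "\<bar>b t\<bar> < B" using bnd[OF t] A_gt B_gt by auto
    have "((\<lambda>t. (a t, b t)) has_vector_derivative (b t, F (a t) (b t))) (at t within {0..})"
      by (rule vd_pair[OF da[OF t] db[OF t]])
    moreover have "Phi (a t, b t) = (b t, F (a t) (b t))"
      using bt clmp_id by (simp add: Phi_def Fm_def less_imp_le)
    ultimately have "((\<lambda>t. (a t, b t)) has_vector_derivative Phi (a t, b t)) (at t within {0..})" by simp
    then have "((\<lambda>t. (\<delta>' t, dS {0..} \<delta>' t)) has_vector_derivative Phi (a t, b t)) (at t within {0..})"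
      by (rule has_vector_derivative_transform[rotated 2]) (use t dSb in \<open>auto simp: a_def D(1)\<close>)
    moreover have "(\<delta>' t, dS {0..} \<delta>' t) = (a t, b t)" using dSb[OF t] by (simp add: a_def D(1))
    ultimately show "((\<lambda>t. (\<delta>' t, dS {0..} \<delta>' t)) has_vector_derivative Phi (\<delta>' t, dS {0..} \<delta>' t)) (at t within {0..})"
      by simp
  qed
qed

theorem main_result:
  "\<exists>\<delta>. is_global_solution l tb h eps d0 \<delta> \<and>
     (\<forall>\<delta>'. is_global_solution l tb h eps d0 \<delta>' \<longrightarrow> (\<forall>t\<ge>0. \<delta>' t = \<delta> t))"
proof -
  obtain u where u: "odesol Phi (d0, 0) u" and uq: "\<And>v. odesol Phi (d0, 0) v \<Longrightarrow> \<forall>t\<ge>0. v t = u t"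
    using Phi_ode by blast
  show ?thesis
  proof (intro exI[of _ "\<lambda>t. fst (u t)"] conjI allI impI)
    show "is_global_solution l tb h eps d0 (\<lambda>t. fst (u t))" by (rule orig_sol[OF u])
    fix \<delta>' t assume "is_global_solution l tb h eps d0 \<delta>'" "t \<ge> (0::real)"
    from uq[OF other_sol[OF this(1)]] this(2) show "\<delta>' t = fst (u t)" by (metis fst_conv)
  qed
qed

end

theorem proposition4p9:
  fixes l tb eps d0 :: real and h :: "real \<Rightarrow> real"
  assumes "l > 0" and "tb > 0"
    and "continuous_on {-l..l} h"
    and "\<forall>x\<in>{-l..l}. h x > 0"
    and "\<forall>x\<in>{-l..l}. h (-x) = h x"
    and "eps \<ge> 0"
    and "Inf (h ` {-l..l}) - eps * \<bar>d0\<bar> > 0"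
    and "eps * \<bar>d0\<bar> < tau0 l tb h (eps * \<bar>d0\<bar>) * (2 * r0 / l)"
  shows "\<exists>\<delta>. is_global_solution l tb h eps d0 \<delta> \<and>
           (\<forall>\<delta>'. is_global_solution l tb h eps d0 \<delta>' \<longrightarrow> (\<forall>t\<ge>0. \<delta>' t = \<delta> t))"
proof -
  interpret s: setting l tb h
    by unfold_locales (use assms in auto)
  interpret m: main l tb h eps d0
    by unfold_locales (use assms in \<open>auto simp: s.hm_def\<close>)
  show ?thesis by (rule m.main_result)
qed

end
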